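(* Let $W:\mathbb R\to SO(4)$ be a symmetric loop which is null-homotopic as a loop in $SO(4)$ (so every lift is $2\pi$-periodic), and suppose some (equivalently every) continuous lift $\tilde W$ of $W$ satisfies $T(\tilde W(0))=\tilde W(0)$. Choose the lift $\tilde W$ with $\tilde W(0)\in X_0$. Then $\tilde W(\pi)\in X_0\sqcup Y_0$, and $W$ is symmetrically homotopic to the constant loop $k\mapsto I_4$ if and only if $\tilde W(\pi)\in X_0$; if $\tilde W(\pi)\in Y_0$, $W$ is not symmetrically homotopic to the constant loop $I_4$.
   Context: Identify $\mathbb H$ with $\mathbb R^4$ via $x_0+x_1i+x_2j+x_3k\leftrightarrow(x_0,x_1,x_2,x_3)^T$; $Sp(1)$ is the group of unit quaternions, with componentwise product and conjugation on $Sp(1)\times Sp(1)$. Let $p:Sp(1)\times Sp(1)\to SO(4)$ send $(g,h)$ to the matrix of the $\mathbb R$-linear map $x\mapsto g^{-1}xh$ (a two-to-one covering map). Let $w=\begin{pmatrix}0&-I_2\\ I_2&0\end{pmatrix}$ and $\tilde w=(1,j)$, and $T(u,v)=\overline{\tilde w^{-1}(u,v)\tilde w}=(\bar u,\ j^{-1}\bar v j)$. Let $X_0=\{(1,a+bi+dk):a^2+b^2+d^2=1\}$, $Y_0=-X_0$. A symmetric loop is a continuous $2\pi$-periodic map $W:\mathbb R\to SO(4)$ with $wW(k)w^{-1}=W(-k)^{-1}$ for all $k$. A symmetric homotopy is a continuous $H:\mathbb R\times[0,1]\to SO(4)$ such that $H(\cdot,t)$ is a symmetric loop for every $t$; two symmetric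 loops are symmetrically homotopic if they are $H(\cdot,0)$ and $H(\cdot,1)$ for some symmetric homotopy. A lift of $W$ is a continuous $\tilde W:\mathbb R\to Sp(1)\times Sp(1)$ with $p\circ\tilde W=W$. (Physically $W$ is the Wilson loop $W_{\mathbf e_2,\pi}(k_x)$ of a four-occupied-band, time-reversal and $C_2$-symmetric insulator with vanishing Fu–Kane–Mele invariant and vanishing partial polarization $\nu_{\Gamma Y}$; "trivial" means symmetrically homotopic to the constant loop.) *)

theory Defs
  imports "HOL-Analysis.Analysis"
begin

text \<open>Quaternions are identified with real^4: x0 + x1 i + x2 j + x3 k corresponds to
  the vector with components x $ 1 = x0, x $ 2 = x1, x $ 3 = x2, x $ 4 = x3
  (the indices 1,2,3,4 of the type 4 are pairwise distinct).\<close>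

definition quat :: "real \<Rightarrow> real \<Rightarrow> real \<Rightarrow> real \<Rightarrow> real^4" where
  "quat a b c d = (\<chi> n. if n = 1 then a else if n = 2 then b else if n = 3 then c else d)"

definition qmult :: "real^4 \<Rightarrow> real^4 \<Rightarrow> real^4" where
  "qmult x y = quat
     (x$1 * y$1 - x$2 * y$2 - x$3 * y$3 - x$4 * y$4)
     (x$1 * y$2 + x$2 * y$1 + x$3 * y$4 - x$4 * y$3)
     (x$1 * y$3 - x$2 * y$4 + x$3 * y$1 + x$4 * y$2)
     (x$1 * y$4 + x$2 * y$3 - x$3 * y$2 + x$4 * y$1)"

definition qconj :: "real^4 \<Rightarrow> real^4" where
  "qconj x = quat (x$1) (- x$2) (- x$3) (- x$4)"

definition qinv :: "real^4 \<Rightarrow> real^4" where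
  "qinv x = (1 / (norm x)\<^sup>2) *\<^sub>R qconj x"

definition qj :: "real^4" where "qj = quat 0 0 1 0"

definition Sp1 :: "(real^4) set" where "Sp1 = {x. norm x = 1}"

definition Sp1xSp1 :: "((real^4) \<times> (real^4)) set" where "Sp1xSp1 = Sp1 \<times> Sp1"

definition SO4 :: "(real^4^4) set" where
  "SO4 = {A. orthogonal_matrix A \<and> det A = 1}"

definition pcov :: "(real^4) \<times> (real^4) \<Rightarrow> real^4^4" where
  "pcov gh = matrix (\<lambda>x. qmult (qmult (qinv (fst gh)) x) (snd gh))"

text \<open>w = [[0, -I2], [I2, 0]] in the coordinates (x0,x1,x2,x3).\<close>
definition wmat :: "real^4^4" where
  "wmat = (\<chi> r c. if r = 3 \<and> c = 1 then 1 else if r = 4 \<and> c = 2 then 1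
                  else if r = 1 \<and> c = 3 then -1 else if r = 2 \<and> c = 4 then -1 else 0)"

definition Tmap :: "(real^4) \<times> (real^4) \<Rightarrow> (real^4) \<times> (real^4)" where
  "Tmap uv = (qconj (fst uv), qmult (qinv qj) (qmult (qconj (snd uv)) qj))"

definition X0 :: "((real^4) \<times> (real^4)) set" where
  "X0 = {(quat 1 0 0 0, quat a b 0 d) | a b d. a\<^sup>2 + b\<^sup>2 + d\<^sup>2 = 1}"

definition Y0 :: "((real^4) \<times> (real^4)) set" where
  "Y0 = (\<lambda>(u, v). (- u, - v)) ` X0"

definition symmetric_loop :: "(real \<Rightarrow> real^4^4) \<Rightarrow> bool" where
  "symmetric_loop W \<longleftrightarrow> continuous_on UNIV W \<and> (\<forall>k. W k \<in> SO4)
     \<and> (\<forall>k. W (k + 2 * pi) = W k)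
     \<and> (\<forall>k. wmat ** W k ** matrix_inv wmat = matrix_inv (W (- k)))"

definition symmetric_homotopy :: "(real \<times> real \<Rightarrow> real^4^4) \<Rightarrow> bool" where
  "symmetric_homotopy H \<longleftrightarrow> continuous_on (UNIV \<times> {0..1}) H
     \<and> (\<forall>t\<in>{0..1}. symmetric_loop (\<lambda>k. H (k, t)))"

definition symmetrically_homotopic :: "(real \<Rightarrow> real^4^4) \<Rightarrow> (real \<Rightarrow> real^4^4) \<Rightarrow> bool" where
  "symmetrically_homotopic W V \<longleftrightarrow> (\<exists>H. symmetric_homotopy H
     \<and> (\<forall>k. H (k, 0) = W k) \<and> (\<forall>k. H (k, 1) = V k))"

definition is_lift :: "(real \<Rightarrow> (real^4) \<times> (real^4)) \<Rightarrow> (real \<Rightarrow> real^4^4) \<Rightarrow> bool" where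
  "is_lift L W \<longleftrightarrow> continuous_on UNIV L \<and> (\<forall>k. L k \<in> Sp1xSp1 \<and> pcov (L k) = W k)"

definition nullhomotopic_SO4 :: "(real \<Rightarrow> real^4^4) \<Rightarrow> bool" where
  "nullhomotopic_SO4 W \<longleftrightarrow>
     (\<exists>a\<in>SO4. homotopic_loops SO4 (\<lambda>t. W (2 * pi * t)) (linepath a a))"

end

theory Submission
  imports Defs
begin


lemma quat_nth[simp]: "quat a b c d $ 1 = a" "quat a b c d $ 2 = b" "quat a b c d $ 3 = c" "quat a b c d $ 4 = d"
  by (simp_all add: quat_def)

lemma quat_eq_iff: "x = y \<longleftrightarrow> x$1 = y$1 \<and> x$2 = y$2 \<and> x$3 = y$3 \<and> (x::real^4)$4 = y$4"
  by (auto simp: vec_eq_iff forall_4)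

lemma norm_sq4: "(norm (x::real^4))\<^sup>2 = (x$1)\<^sup>2 + (x$2)\<^sup>2 + (x$3)\<^sup>2 + (x$4)\<^sup>2"
proof -
  have "(norm x)\<^sup>2 = x \<bullet> x" by (simp add: dot_square_norm)
  then show ?thesis by (simp add: inner_vec_def sum_4 power2_eq_square)
qed

definition qone :: "real^4" where "qone = quat 1 0 0 0"

lemma qone_nth[simp]: "qone$1 = 1" "qone$2 = 0" "qone$3 = 0" "qone$4 = 0"
  by (simp_all add: qone_def)

lemma qmult_nth[simp]:
  "qmult x y $ 1 = x$1 * y$1 - x$2 * y$2 - x$3 * y$3 - x$4 * y$4"
  "qmult x y $ 2 = x$1 * y$2 + x$2 * y$1 + x$3 * y$4 - x$4 * y$3"
  "qmult x y $ 3 = x$1 * y$3 - x$2 * y$4 + x$3 * y$1 + x$4 * y$2"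
  "qmult x y $ 4 = x$1 * y$4 + x$2 * y$3 - x$3 * y$2 + x$4 * y$1"
  by (simp_all add: qmult_def)

lemma qconj_nth[simp]: "qconj x $ 1 = x$1" "qconj x $ 2 = - x$2" "qconj x $ 3 = - x$3" "qconj x $ 4 = - x$4"
  by (simp_all add: qconj_def)

lemma qmult_assoc: "qmult (qmult x y) z = qmult x (qmult y z)"
  by (simp add: quat_eq_iff algebra_simps)

lemma qmult_qone[simp]: "qmult qone x = x" "qmult x qone = x"
  by (simp_all add: quat_eq_iff)

lemma qconj_qconj[simp]: "qconj (qconj x) = x"
  by (simp add: quat_eq_iff)

lemma qconj_qmult: "qconj (qmult x y) = qmult (qconj y) (qconj x)"
  by (simp add: quat_eq_iff algebra_simps)

lemma qconj_qone[simp]: "qconj qone = qone" by (simp add: quat_eq_iff)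

lemma norm_qconj[simp]: "norm (qconj x) = norm x"
proof -
  have "(norm (qconj x))\<^sup>2 = (norm x)\<^sup>2" unfolding norm_sq4 by simp
  then show ?thesis by (simp add: power2_eq_iff_nonneg)
qed

lemma norm_qmult_sq: "(norm (qmult x y))\<^sup>2 = (norm x)\<^sup>2 * (norm y)\<^sup>2"
  unfolding norm_sq4 by (simp add: power2_eq_square algebra_simps)

lemma norm_qmult: "norm (qmult x y) = norm x * norm y"
proof -
  have "(norm (qmult x y))\<^sup>2 = (norm x * norm y)\<^sup>2" using norm_qmult_sq[of x y] by (simp add: power_mult_distrib)
  then show ?thesis by (simp add: power2_eq_iff_nonneg)
qed

lemma qmult_qconj_right: "qmult x (qconj x) = (norm x)\<^sup>2 *\<^sub>R qone"
  unfolding norm_sq4 by (simp add: quat_eq_iff power2_eq_square algebra_simps)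

lemma qmult_qconj_left: "qmult (qconj x) x = (norm x)\<^sup>2 *\<^sub>R qone"
  unfolding norm_sq4 by (simp add: quat_eq_iff power2_eq_square algebra_simps)

lemma qmult_qconj_unit: "norm x = 1 \<Longrightarrow> qmult x (qconj x) = qone" "norm x = 1 \<Longrightarrow> qmult (qconj x) x = qone"
  by (simp_all add: qmult_qconj_right qmult_qconj_left)

lemma qinv_unit: "norm x = 1 \<Longrightarrow> qinv x = qconj x"
  by (simp add: qinv_def)

lemma qmult_add_left: "qmult (x + y) z = qmult x z + qmult y z"
  by (simp add: quat_eq_iff algebra_simps)
lemma qmult_add_right: "qmult z (x + y) = qmult z x + qmult z y"
  by (simp add: quat_eq_iff algebra_simps)
lemma qmult_scaleR_left[simp]: "qmult (c *\<^sub>R x) z = c *\<^sub>R qmult x z"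
  by (simp add: quat_eq_iff algebra_simps)
lemma qmult_scaleR_right[simp]: "qmult z (c *\<^sub>R x) = c *\<^sub>R qmult z x"
  by (simp add: quat_eq_iff algebra_simps)
lemma qmult_neg[simp]: "qmult (- x) z = - qmult x z" "qmult z (- x) = - qmult z x"
  by (simp_all add: quat_eq_iff algebra_simps)
lemma qconj_neg[simp]: "qconj (- x) = - qconj x"
  by (simp add: quat_eq_iff)
lemma qconj_scaleR[simp]: "qconj (c *\<^sub>R x) = c *\<^sub>R qconj x"
  by (simp add: quat_eq_iff)

lemma linear_qmult2: "linear (\<lambda>x. qmult (qmult a x) b)"
  by (rule linearI) (simp_all add: qmult_add_left qmult_add_right)

lemma continuous_on_quat[continuous_intros]:
  assumes "continuous_on S a" "continuous_on S b" "continuous_on S c" "continuous_on S d"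
  shows "continuous_on S (\<lambda>x. quat (a x) (b x) (c x) (d x))"
  unfolding quat_def apply (intro continuous_intros)
  subgoal for n by (cases "n=1"; cases "n=2"; cases "n=3"; simp add: assms)
  done

lemma continuous_on_qmult[continuous_intros]:
  assumes "continuous_on S f" "continuous_on S g"
  shows "continuous_on S (\<lambda>x. qmult (f x) (g x))"
  unfolding qmult_def by (intro continuous_intros assms)

lemma continuous_on_qconj[continuous_intros]:
  assumes "continuous_on S f"
  shows "continuous_on S (\<lambda>x. qconj (f x))"
  unfolding qconj_def by (intro continuous_intros assms)


definition pmul :: "(real^4) \<times> (real^4) \<Rightarrow> (real^4) \<times> (real^4) \<Rightarrow> (real^4) \<times> (real^4)" where
  "pmul a b = (qmult (fst a) (fst b), qmult (snd a) (snd b))"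
definition pcnj :: "(real^4) \<times> (real^4) \<Rightarrow> (real^4) \<times> (real^4)" where
  "pcnj a = (qconj (fst a), qconj (snd a))"

lemma norm_qone[simp]: "norm qone = 1"
proof -
  have "(norm qone)\<^sup>2 = 1\<^sup>2" using norm_sq4[of qone] by simp
  then show ?thesis using power2_eq_iff_nonneg[of "norm qone" 1] by simp
qed

lemma inC: "a \<in> Sp1xSp1 \<longleftrightarrow> norm (fst a) = 1 \<and> norm (snd a) = 1"
  by (cases a) (simp add: Sp1xSp1_def Sp1_def)

lemma Sp1_sphere: "Sp1 = sphere 0 1"
  by (auto simp: Sp1_def)

lemma pcov_apply: "pcov gh *v x = qmult (qmult (qinv (fst gh)) x) (snd gh)"
  unfolding pcov_def using matrix_vector_mul(2)[OF linear_qmult2] by metis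

lemma pcov_apply_C: "a \<in> Sp1xSp1 \<Longrightarrow> pcov a *v x = qmult (qmult (qconj (fst a)) x) (snd a)"
  by (simp add: pcov_apply inC qinv_unit)

lemma pmul_C: "a \<in> Sp1xSp1 \<Longrightarrow> b \<in> Sp1xSp1 \<Longrightarrow> pmul a b \<in> Sp1xSp1"
  by (simp add: inC pmul_def norm_qmult)

lemma pcnj_C: "a \<in> Sp1xSp1 \<Longrightarrow> pcnj a \<in> Sp1xSp1"
  by (simp add: inC pcnj_def)

lemma neg_C: "a \<in> Sp1xSp1 \<Longrightarrow> - a \<in> Sp1xSp1"
  by (simp add: inC)

lemma one_C: "(qone, qone) \<in> Sp1xSp1"
  by (simp add: inC)

lemma pcov_mul: "a \<in> Sp1xSp1 \<Longrightarrow> b \<in> Sp1xSp1 \<Longrightarrow> pcov a ** pcov b = pcov (pmul b a)"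
proof -
  assume a: "a \<in> Sp1xSp1" and b: "b \<in> Sp1xSp1"
  have c: "pmul b a \<in> Sp1xSp1" by (rule pmul_C[OF b a])
  show ?thesis unfolding matrix_eq
    by (simp add: matrix_vector_mul_assoc[symmetric] pcov_apply_C[OF a] pcov_apply_C[OF b] pcov_apply_C[OF c])
       (simp add: pmul_def qmult_assoc qconj_qmult)
qed

lemma pcov_one: "pcov (qone, qone) = mat 1"
  unfolding matrix_eq by (simp add: pcov_apply_C one_C)

lemma qinv_neg: "qinv (- x) = - qinv x"
  by (simp add: qinv_def)

lemma pcov_neg: "pcov (- a) = pcov a"
  unfolding matrix_eq by (simp add: pcov_apply qinv_neg)

lemma pcov_pcnj: "a \<in> Sp1xSp1 \<Longrightarrow> pcov a ** pcov (pcnj a) = mat 1 \<and> pcov (pcnj a) ** pcov a = mat 1"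
  by (simp add: pcov_mul pcnj_C pmul_def pcnj_def inC qmult_qconj_unit pcov_one)

lemma matrix_inv_eqI:
  fixes A B :: "real^'n^'n"
  assumes "A ** B = mat 1" "B ** A = mat 1"
  shows "matrix_inv A = B"
proof -
  have "\<exists>A'. A ** A' = mat 1 \<and> A' ** A = mat 1" using assms by blast
  then have i: "A ** matrix_inv A = mat 1" "matrix_inv A ** A = mat 1"
    unfolding matrix_inv_def by (metis (mono_tags, lifting) someI_ex)+
  have "matrix_inv A = (B ** A) ** matrix_inv A" using assms by (simp add: matrix_mul_lid)
  also have "\<dots> = B" using i by (simp add: matrix_mul_assoc[symmetric] matrix_mul_rid)
  finally show ?thesis .
qed

lemma pcov_inv: "a \<in> Sp1xSp1 \<Longrightarrow> matrix_inv (pcov a) = pcov (pcnj a)"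
  using pcov_pcnj matrix_inv_eqI by blast

lemma pcov_orth: "a \<in> Sp1xSp1 \<Longrightarrow> orthogonal_matrix (pcov a)"
proof -
  assume a: "a \<in> Sp1xSp1"
  have "orthogonal_transformation (\<lambda>x. qmult (qmult (qinv (fst a)) x) (snd a))"
    unfolding orthogonal_transformation using a
    by (simp add: linear_qmult2 norm_qmult inC qinv_unit)
  then show ?thesis unfolding pcov_def orthogonal_transformation_matrix by simp
qed

lemma pcov_C_explicit: "a \<in> Sp1xSp1 \<Longrightarrow> pcov a = (\<chi> i j. qmult (qmult (qconj (fst a)) (axis j 1)) (snd a) $ i)"
  unfolding pcov_def matrix_def by (simp add: inC qinv_unit)

lemma continuous_pcov: "continuous_on Sp1xSp1 pcov"
proof -
  have "continuous_on Sp1xSp1 (\<lambda>a. (\<chi> i j. qmult (qmult (qconj (fst a)) (axis j 1)) (snd a) $ i) :: real^4^4)"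
    by (intro continuous_intros)
  then show ?thesis by (rule continuous_on_eq) (simp add: pcov_C_explicit)
qed

lemma continuous_on_det[continuous_intros]:
  fixes f :: "'a::topological_space \<Rightarrow> real^'n^'n"
  assumes "continuous_on S f"
  shows "continuous_on S (\<lambda>x. det (f x))"
  unfolding det_def by (intro continuous_intros assms)

lemma connected_C: "connected Sp1xSp1"
  unfolding Sp1xSp1_def Sp1_sphere by (intro connected_Times connected_sphere) auto

lemma det_pcov: "a \<in> Sp1xSp1 \<Longrightarrow> det (pcov a) = 1"
proof -
  assume a: "a \<in> Sp1xSp1"
  let ?f = "\<lambda>a. det (pcov a)"
  have cont: "continuous_on Sp1xSp1 ?f" by (intro continuous_intros continuous_pcov)
  have con: "connected (?f ` Sp1xSp1)" by (rule connected_continuous_image[OF cont connected_C])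
  have pm: "\<And>b. b \<in> Sp1xSp1 \<Longrightarrow> ?f b = 1 \<or> ?f b = -1"
    using det_orthogonal_matrix pcov_orth by blast
  have one: "1 \<in> ?f ` Sp1xSp1" using one_C by (force simp: pcov_one)
  show ?thesis
  proof (rule ccontr)
    assume "?f a \<noteq> 1"
    then have "?f a = -1" using pm a by blast
    then have "-1 \<in> ?f ` Sp1xSp1" using a by force
    then have "0 \<in> ?f ` Sp1xSp1" using con one unfolding connected_iff_interval
      by (metis le_minus_one_simps(1) zero_less_one_class.zero_le_one)
    then show False using pm by fastforce
  qed
qed

lemma pcov_SO4: "a \<in> Sp1xSp1 \<Longrightarrow> pcov a \<in> SO4"
  by (simp add: SO4_def pcov_orth det_pcov)


lemma qmult_cancel:
  "norm x = 1 \<Longrightarrow> qmult x (qmult (qconj x) y) = y"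
  "norm x = 1 \<Longrightarrow> qmult (qconj x) (qmult x y) = y"
  by (simp_all add: qmult_assoc[symmetric] qmult_qconj_unit)

lemma unit_real:
  assumes "norm u = 1" "qmult u (quat 0 1 0 0) = qmult (quat 0 1 0 0) u"
    "qmult u (quat 0 0 1 0) = qmult (quat 0 0 1 0) u"
  shows "u = qone \<or> u = - qone"
proof -
  have z: "u$2 = 0" "u$3 = 0" "u$4 = 0" using assms(2,3) by (simp_all add: quat_eq_iff)
  have "(u$1)\<^sup>2 = 1" using norm_sq4[of u] assms(1) z by simp
  then have "u$1 = 1 \<or> u$1 = -1" by (simp add: power2_eq_1_iff)
  then show ?thesis using z by (auto simp: quat_eq_iff)
qed

lemma pcov_eq:
  assumes a: "a \<in> Sp1xSp1" and b: "b \<in> Sp1xSp1" and e: "pcov a = pcov b"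
  shows "b = a \<or> b = - a"
proof -
  obtain ga ha where ap: "a = (ga, ha)" by (cases a)
  obtain gb hb where bp: "b = (gb, hb)" by (cases b)
  have n: "norm ga = 1" "norm ha = 1" "norm gb = 1" "norm hb = 1" using a b ap bp by (auto simp: inC)
  define u where "u = qmult gb (qconj ga)"
  define v where "v = qmult hb (qconj ha)"
  have E: "qmult u x = qmult x v" for x
  proof -
    have "qmult (qmult (qconj ga) x) ha = qmult (qmult (qconj gb) x) hb"
      using e pcov_apply_C[OF a, of x] pcov_apply_C[OF b, of x] ap bp by simp
    then have "qmult gb (qmult (qmult (qmult (qconj ga) x) ha) (qconj ha))
             = qmult gb (qmult (qmult (qmult (qconj gb) x) hb) (qconj ha))" by simp
    then show ?thesis unfolding u_def v_def using n
      by (simp add: qmult_assoc qmult_qconj_unit qmult_cancel)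
  qed
  have uv: "u = v" using E[of qone] by simp
  have nu: "norm u = 1" using n by (simp add: u_def norm_qmult)
  have "u = qone \<or> u = - qone"
    by (rule unit_real[OF nu]) (use E uv in auto)
  moreover have "gb = qmult u ga" "hb = qmult v ha" using n
    by (simp_all add: u_def v_def qmult_assoc qmult_qconj_unit)
  ultimately show ?thesis using ap bp uv by auto
qed

definition jc :: "real^4 \<Rightarrow> real^4" where "jc v = quat (v$1) (v$2) (- v$3) (v$4)"

lemma jc_nth[simp]: "jc v $ 1 = v$1" "jc v $ 2 = v$2" "jc v $ 3 = - v$3" "jc v $ 4 = v$4"
  by (simp_all add: jc_def)

lemma norm_qj: "norm qj = 1"
proof -
  have "(norm qj)\<^sup>2 = 1\<^sup>2" using norm_sq4[of qj] by (simp add: qj_def)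
  then show ?thesis using power2_eq_iff_nonneg[of "norm qj" 1] by simp
qed

lemma qinv_qj: "qinv qj = quat 0 0 (-1) 0"
  using norm_qj by (simp add: qinv_unit qj_def quat_eq_iff)

lemma Tmap_explicit: "Tmap a = (qconj (fst a), jc (snd a))"
  unfolding Tmap_def qinv_qj by (simp add: qj_def quat_eq_iff)

lemma norm_jc[simp]: "norm (jc v) = norm v"
proof -
  have "(norm (jc v))\<^sup>2 = (norm v)\<^sup>2" unfolding norm_sq4 by simp
  then show ?thesis by (simp add: power2_eq_iff_nonneg)
qed

lemma Tmap_C: "a \<in> Sp1xSp1 \<Longrightarrow> Tmap a \<in> Sp1xSp1"
  by (simp add: Tmap_explicit inC)

lemma Tmap_Tmap[simp]: "Tmap (Tmap a) = a"
  by (simp add: Tmap_explicit quat_eq_iff prod_eq_iff)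

lemma Tmap_neg: "Tmap (- a) = - Tmap a"
  by (simp add: Tmap_explicit quat_eq_iff prod_eq_iff)

lemma Tmap_pmul: "Tmap (pmul a b) = pmul (Tmap b) (Tmap a)"
  by (simp add: Tmap_explicit pmul_def qconj_qmult quat_eq_iff prod_eq_iff algebra_simps)

lemma Tmap_one: "Tmap (qone, qone) = (qone, qone)"
  by (simp add: Tmap_explicit quat_eq_iff)

lemma qj_C: "(qone, qj) \<in> Sp1xSp1"
  using norm_qj by (simp add: inC)

lemma wmat_pcov: "wmat = pcov (qone, qj)"
  unfolding matrix_eq
proof
  fix x :: "real^4"
  show "wmat *v x = pcov (qone, qj) *v x"
    unfolding pcov_apply_C[OF qj_C] by (simp add: qj_def wmat_def matrix_vector_mult_def sum_4 quat_eq_iff)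
qed

lemma wmat_inv: "matrix_inv wmat = pcov (qone, qconj qj)"
  using pcov_inv[OF qj_C] by (simp add: wmat_pcov pcnj_def)

lemma sym_key:
  assumes a: "a \<in> Sp1xSp1"
  shows "wmat ** pcov a ** matrix_inv wmat = matrix_inv (pcov (Tmap a))"
proof -
  have w': "(qone, qconj qj) \<in> Sp1xSp1" using qj_C by (simp add: inC)
  have "wmat ** pcov a ** matrix_inv wmat = pcov (pmul (qone, qconj qj) (pmul a (qone, qj)))"
    unfolding wmat_inv by (simp add: wmat_pcov pcov_mul a qj_C w' pmul_C)
  also have "pmul (qone, qconj qj) (pmul a (qone, qj)) = pcnj (Tmap a)"
    by (simp add: pmul_def pcnj_def Tmap_explicit qj_def quat_eq_iff prod_eq_iff)
  finally show ?thesis by (simp add: pcov_inv Tmap_C a)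
qed


definition "e2 = quat 0 1 0 0"
definition "e3 = quat 0 0 1 0"
definition "e4 = quat 0 0 0 1"

lemma e_nth[simp]: "e2$1 = 0" "e2$2 = 1" "e2$3 = 0" "e2$4 = 0"
  "e3$1 = 0" "e3$2 = 0" "e3$3 = 1" "e3$4 = 0" "e4$1 = 0" "e4$2 = 0" "e4$3 = 0" "e4$4 = 1"
  by (simp_all add: e2_def e3_def e4_def)

lemma inner4: "x \<bullet> (y::real^4) = x$1*y$1 + x$2*y$2 + x$3*y$3 + x$4*y$4"
  by (simp add: inner_vec_def sum_4)

lemma norm1_iff: "norm (x::real^4) = 1 \<longleftrightarrow> (x$1)\<^sup>2 + (x$2)\<^sup>2 + (x$3)\<^sup>2 + (x$4)\<^sup>2 = 1"
  by (metis norm_sq4 norm_ge_zero power2_eq_iff_nonneg zero_le_one power_one)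

lemma orth_inner: "orthogonal_matrix B \<Longrightarrow> (B *v x) \<bullet> (B *v y) = x \<bullet> (y::real^'n)"
  by (metis orthogonal_transformation_def orthogonal_transformation_matrix matrix_of_matrix_vector_mul
      matrix_vector_mul_linear)

lemma orth_norm: "orthogonal_matrix B \<Longrightarrow> norm (B *v x) = norm (x::real^'n)"
  by (simp add: norm_eq_sqrt_inner orth_inner)

lemma qmult_diff: "qmult (x - y) z = qmult x z - qmult y z" "qmult z (x - y) = qmult z x - qmult z y"
  by (simp_all add: quat_eq_iff algebra_simps)

lemma pure_sq: "r$1 = 0 \<Longrightarrow> norm r = 1 \<Longrightarrow> qmult r r = - qone"
  unfolding norm1_iff by (simp add: quat_eq_iff power2_eq_square)

lemma normalize_conj:
  assumes "c0 \<noteq> 0" "qmult s c0 = qmult c0 r"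
  shows "norm ((1 / norm c0) *\<^sub>R c0) = 1 \<and>
    qmult (qmult ((1 / norm c0) *\<^sub>R c0) r) (qconj ((1 / norm c0) *\<^sub>R c0)) = s"
proof -
  have n: "norm c0 \<noteq> 0" using assms by simp
  have "qmult (qmult c0 r) (qconj c0) = (norm c0)\<^sup>2 *\<^sub>R s"
    using assms(2)[symmetric] by (simp add: qmult_assoc qmult_qconj_right)
  then show ?thesis using n by (simp add: power2_eq_square)
qed

lemma conj_c0:
  assumes "r$1 = 0" "s$1 = 0" "norm r = 1" "norm s = 1" "r \<noteq> - s"
  shows "qone - qmult s r \<noteq> 0 \<and> qmult s (qone - qmult s r) = qmult (qone - qmult s r) r"
proof
  have sr: "qmult s s = - qone" "qmult r r = - qone" using pure_sq assms by auto
  show "qone - qmult s r \<noteq> 0"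
  proof
    assume "qone - qmult s r = 0"
    then have "qmult s r = qone" by simp
    then have "qmult s (qmult s r) = s" by simp
    then have "- r = s" using sr by (simp add: qmult_assoc[symmetric])
    then show False using assms(5) by auto
  qed
  have "qmult s (qone - qmult s r) = s - qmult (qmult s s) r"
    by (simp add: qmult_diff qmult_assoc)
  also have "\<dots> = s + r" using sr by simp
  finally have 1: "qmult s (qone - qmult s r) = s + r" .
  have "qmult (qone - qmult s r) r = r - qmult s (qmult r r)"
    by (simp add: qmult_diff qmult_assoc)
  also have "\<dots> = s + r" using sr by simp
  finally have 2: "qmult (qone - qmult s r) r = s + r" .
  from 1 2 show "qmult s (qone - qmult s r) = qmult (qone - qmult s r) r" by simp
qed

lemma norm_e[simp]: "norm e2 = 1" "norm e3 = 1" "norm e4 = 1"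
  by (simp_all add: norm1_iff)

lemma step_e2:
  assumes "r$1 = 0" "norm r = 1"
  shows "\<exists>c. norm c = 1 \<and> qmult (qmult c r) (qconj c) = e2"
proof (cases "r = - e2")
  case True
  then show ?thesis by (intro exI[of _ qj]) (simp add: norm_qj qj_def norm_e[unfolded e2_def e3_def] e2_def quat_eq_iff)
next
  case False
  define c0 where "c0 = qone - qmult e2 r"
  have c0: "c0 \<noteq> 0" "qmult e2 c0 = qmult c0 r" using conj_c0[OF assms(1) _ assms(2) _ False] by (auto simp: c0_def)
  show ?thesis using normalize_conj[OF c0] by blast
qed

lemma step_e3:
  assumes "r$1 = 0" "r$2 = 0" "norm r = 1"
  shows "\<exists>c. norm c = 1 \<and> qmult (qmult c r) (qconj c) = e3 \<and> qmult (qmult c e2) (qconj c) = e2"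
proof (cases "r = - e3")
  case True
  then show ?thesis by (intro exI[of _ e2]) (simp add: norm_e[unfolded e2_def e3_def] e2_def e3_def quat_eq_iff)
next
  case False
  define c0 where "c0 = qone - qmult e3 r"
  have c0: "c0 \<noteq> 0" "qmult e3 c0 = qmult c0 r" using conj_c0[OF assms(1) _ assms(3) _ False] by (auto simp: c0_def)
  define c where "c = (1 / norm c0) *\<^sub>R c0"
  have c: "norm c = 1" "qmult (qmult c r) (qconj c) = e3" using normalize_conj[OF c0] by (auto simp: c_def)
  have com: "qmult c0 e2 = qmult e2 c0" using assms(1,2) by (simp add: c0_def quat_eq_iff e2_def)
  then have "qmult c e2 = qmult e2 c" by (simp add: c_def)
  then have "qmult (qmult c e2) (qconj c) = e2" using c(1) by (simp add: qmult_assoc qmult_qconj_unit)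
  with c show ?thesis by blast
qed

lemma axis_4: "axis 1 1 = qone" "axis 2 1 = e2" "axis 3 1 = e3" "axis 4 1 = (e4::real^4)"
  by (simp_all add: quat_eq_iff axis_def)

lemma entry_col: "B $ i $ k = (B *v axis k 1) $ i" for B :: "real^'n^'m"
  by (simp add: matrix_vector_mult_basis column_def)

lemma final_step:
  fixes B :: "real^4^4"
  assumes o: "orthogonal_matrix B" and d: "det B = 1" and
    b: "B *v qone = qone" "B *v e2 = e2" "B *v e3 = e3"
  shows "B = mat 1"
proof -
  let ?t = "B *v e4"
  have "?t \<bullet> qone = 0" "?t \<bullet> e2 = 0" "?t \<bullet> e3 = 0" "norm ?t = 1"
    using orth_inner[OF o, of e4 qone] orth_inner[OF o, of e4 e2] orth_inner[OF o, of e4 e3] orth_norm[OF o, of e4] b by (simp_all add: inner4)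
  then have t: "?t $ 1 = 0" "?t $ 2 = 0" "?t $ 3 = 0" "(?t $ 4)\<^sup>2 = 1"
    by (simp_all add: inner4 norm1_iff)
  obtain tau where tau: "tau = ?t $ 4" by blast
  have E: "B $ i $ k = (if k = 4 then (if i = 4 then tau else 0) else (if i = k then 1 else 0))" for i k
  proof -
    have "(B *v axis k 1) $ i = (if k = 4 then (if i = 4 then tau else 0) else (if i = k then 1 else 0))"
      using b t tau exhaust_4[of k] exhaust_4[of i]
      by (elim disjE) (simp_all add: axis_4)
    then show ?thesis by (simp add: matrix_vector_mult_basis column_def)
  qed
  have "det B = tau"
    by (subst det_diagonal) (simp_all only: E UNIV_4, auto)
  then have "tau = 1" using d by simp
  then show ?thesis by (simp only: vec_eq_iff E mat_def) simp
qed

lemma SO4_mul: "A \<in> SO4 \<Longrightarrow> B \<in> SO4 \<Longrightarrow> A ** B \<in> SO4"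
  by (simp add: SO4_def orthogonal_matrix_mul det_mul)

lemma pcov_surj: "A \<in> SO4 \<Longrightarrow> A \<in> pcov ` Sp1xSp1"
proof -
  assume A: "A \<in> SO4"
  define q where "q = A *v qone"
  have nq: "norm q = 1" using A by (simp add: q_def SO4_def orth_norm)
  define p1 where "p1 = (qone, qconj q)"
  have p1: "p1 \<in> Sp1xSp1" using nq by (simp add: p1_def inC)
  define B1 where "B1 = pcov p1 ** A"
  have B1: "B1 \<in> SO4" using A p1 by (simp add: B1_def SO4_mul pcov_SO4)
  have B1a: "B1 *v qone = qone" using nq
    by (simp add: B1_def matrix_vector_mul_assoc[symmetric] pcov_apply_C[OF p1] q_def[symmetric]) (simp add: p1_def qmult_qconj_unit)
  define r where "r = B1 *v e2"
  have "r \<bullet> qone = 0" "norm r = 1" using B1 B1a orth_inner[of B1 e2 qone] orth_norm[of B1 e2]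
    by (simp_all add: SO4_def r_def inner4)
  then have r: "r$1 = 0" "norm r = 1" by (simp_all add: inner4)
  obtain c where c: "norm c = 1" "qmult (qmult c r) (qconj c) = e2" using step_e2[OF r] by blast
  define p2 where "p2 = (qconj c, qconj c)"
  have p2: "p2 \<in> Sp1xSp1" using c by (simp add: p2_def inC)
  define B2 where "B2 = pcov p2 ** B1"
  have B2: "B2 \<in> SO4" using B1 p2 by (simp add: B2_def SO4_mul pcov_SO4)
  have B2a: "B2 *v qone = qone" "B2 *v e2 = e2" using c
    by (simp_all add: B2_def matrix_vector_mul_assoc[symmetric] pcov_apply_C[OF p2] B1a r_def[symmetric]) (simp_all add: p2_def qmult_qconj_unit)
  define s where "s = B2 *v e3"
  have "s \<bullet> qone = 0" "s \<bullet> e2 = 0" "norm s = 1" using B2 B2a orth_inner[of B2 e3 qone] orth_inner[of B2 e3 e2] orth_norm[of B2 e3]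
    by (simp_all add: SO4_def s_def inner4)
  then have s: "s$1 = 0" "s$2 = 0" "norm s = 1" by (simp_all add: inner4)
  obtain d where d: "norm d = 1" "qmult (qmult d s) (qconj d) = e3" "qmult (qmult d e2) (qconj d) = e2"
    using step_e3[OF s] by blast
  define p3 where "p3 = (qconj d, qconj d)"
  have p3: "p3 \<in> Sp1xSp1" using d by (simp add: p3_def inC)
  define B3 where "B3 = pcov p3 ** B2"
  have B3: "B3 \<in> SO4" using B2 p3 by (simp add: B3_def SO4_mul pcov_SO4)
  have B3a: "B3 *v qone = qone" "B3 *v e2 = e2" "B3 *v e3 = e3" using d
    by (simp_all add: B3_def matrix_vector_mul_assoc[symmetric] pcov_apply_C[OF p3] B2a s_def[symmetric]) (simp_all add: p3_def qmult_qconj_unit)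
  have I: "B3 = mat 1" using B3 B3a final_step by (auto simp: SO4_def)
  have "A = pcov (pcnj p1) ** (pcov (pcnj p2) ** (pcov (pcnj p3) ** B3))"
    using pcov_pcnj[OF p1] pcov_pcnj[OF p2] pcov_pcnj[OF p3]
    by (simp add: B3_def B2_def B1_def matrix_mul_assoc matrix_mul_lid)
  also have "\<dots> = pcov (pmul (pmul (pcnj p3) (pcnj p2)) (pcnj p1))"
    using p1 p2 p3 by (simp add: I matrix_mul_rid pcov_mul pcnj_C pmul_C matrix_mul_assoc[symmetric])
  finally show ?thesis using p1 p2 p3 by (simp add: pcnj_C pmul_C)
qed


lemma C_compact: "compact Sp1xSp1"
  unfolding Sp1xSp1_def Sp1_sphere by (intro compact_Times compact_sphere)

lemma pcov_img: "pcov ` Sp1xSp1 = SO4"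
  using pcov_SO4 pcov_surj by blast

lemma pcov_open_map:
  assumes "openin (top_of_set Sp1xSp1) V"
  shows "openin (top_of_set SO4) (pcov ` V)"
proof -
  obtain Op where Op: "open Op" "V = Sp1xSp1 \<inter> Op" using assms by (auto simp: openin_open)
  define K where "K = Sp1xSp1 - (Op \<union> uminus ` Op)"
  have "closed (Op \<union> uminus ` Op)" if False using that by simp
  have oo: "open (Op \<union> uminus ` Op)" using Op(1) open_negations by blast
  have K: "compact K" unfolding K_def Diff_eq
    by (intro compact_Int_closed C_compact) (use oo closed_Compl[of "Op \<union> uminus ` Op"] in \<open>simp add: Compl_Un\<close>)
  have VS: "pcov ` V \<subseteq> SO4" using Op pcov_SO4 by auto
  have eq: "pcov ` V = SO4 - pcov ` K"
  proof
    show "pcov ` V \<subseteq> SO4 - pcov ` K"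
    proof
      fix x assume "x \<in> pcov ` V"
      then obtain v where v: "v \<in> V" "x = pcov v" by blast
      have "x \<notin> pcov ` K"
      proof
        assume "x \<in> pcov ` K"
        then obtain b where b: "b \<in> K" "x = pcov b" by blast
        then have "b = v \<or> b = - v" using pcov_eq[of v b] v Op by (auto simp: K_def)
        then show False using b v Op by (auto simp: K_def)
      qed
      then show "x \<in> SO4 - pcov ` K" using VS v by auto
    qed
    show "SO4 - pcov ` K \<subseteq> pcov ` V"
    proof
      fix x assume x: "x \<in> SO4 - pcov ` K"
      then obtain b where b: "b \<in> Sp1xSp1" "x = pcov b" using pcov_img by blast
      have "b \<in> Op \<or> b \<in> uminus ` Op" using x b by (auto simp: K_def)
      then show "x \<in> pcov ` V"
      proof
        assume "b \<in> Op" then show ?thesis using b Op by auto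
      next
        assume "b \<in> uminus ` Op"
        then have "- b \<in> V" using Op b neg_C by force
        then show ?thesis using b pcov_neg by (metis image_eqI)
      qed
    qed
  qed
  have "closedin (top_of_set SO4) (pcov ` K)"
  proof (rule closed_subset)
    show "pcov ` K \<subseteq> SO4" using pcov_SO4 by (auto simp: K_def)
    show "closed (pcov ` K)"
      by (intro compact_imp_closed compact_continuous_image continuous_on_subset[OF continuous_pcov] K)
         (auto simp: K_def)
  qed
  then show ?thesis unfolding eq by (intro openin_diff) auto
qed

lemma hom_piece:
  assumes U: "openin (top_of_set Sp1xSp1) U" and nU: "\<And>b. b \<in> U \<Longrightarrow> - b \<notin> U"
  shows "\<exists>q. homeomorphism U (pcov ` U) pcov q"
proof -
  have UC: "U \<subseteq> Sp1xSp1" using U by (simp add: openin_imp_subset)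
  obtain g where "homeomorphism U (pcov ` U) pcov g"
  proof (rule homeomorphism_injective_open_map)
    show "continuous_on U pcov" using continuous_on_subset[OF continuous_pcov UC] .
    show "inj_on pcov U"
    proof
      fix b b' assume "b \<in> U" "b' \<in> U" "pcov b = pcov b'"
      then have "b' = b \<or> b' = - b" using pcov_eq[of b b'] UC by auto
      then show "b = b'" using nU \<open>b \<in> U\<close> \<open>b' \<in> U\<close> by metis
    qed
    fix W assume W: "openin (top_of_set U) W"
    have "openin (top_of_set Sp1xSp1) W" using openin_trans[OF W U] .
    then have "openin (top_of_set SO4) (pcov ` W)" by (rule pcov_open_map)
    then show "openin (top_of_set (pcov ` U)) (pcov ` W)"
    proof (rule openin_subset_trans)
      show "pcov ` W \<subseteq> pcov ` U" using openin_imp_subset[OF W] by blast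
      show "pcov ` U \<subseteq> SO4" using UC pcov_SO4 by blast
    qed
  qed auto
  then show ?thesis by blast
qed

lemma norm_C: "b \<in> Sp1xSp1 \<Longrightarrow> norm b = sqrt 2"
  by (cases b) (simp add: inC norm_Pair)

lemma pcov_covering: "covering_space Sp1xSp1 pcov SO4"
proof (rule covering_spaceI)
  show "continuous_on Sp1xSp1 pcov" by (rule continuous_pcov)
  show "pcov ` Sp1xSp1 = SO4" by (rule pcov_img)
  fix x assume "x \<in> SO4"
  then obtain a where a: "a \<in> Sp1xSp1" "pcov a = x" using pcov_img by (metis imageE)
  define U where "U = Sp1xSp1 \<inter> ball a 1"
  define U2 where "U2 = Sp1xSp1 \<inter> ball (- a) 1"
  have s2: "sqrt 2 > (1::real)" using real_sqrt_less_iff[of 1 2] by simp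
  have disj: "b \<notin> U2" if "b \<in> U" for b
  proof
    assume "b \<in> U2"
    then have d: "dist a b < 1" "dist b (- a) < 1" using that unfolding U_def U2_def
      by (auto simp: dist_commute)
    have "dist a (- a) < 2" using dist_triangle[of a "- a" b] d by linarith
    moreover have "dist a (- a) = 2 * sqrt 2"
    proof -
      have "dist a (- a) = norm (2 *\<^sub>R a)" unfolding dist_norm by (simp add: scaleR_2)
      also have "\<dots> = 2 * norm a" by simp
      finally show ?thesis using norm_C[OF a(1)] by simp
    qed
    ultimately show False using s2 by simp
  qed
  have negU: "- b \<in> U2 \<longleftrightarrow> b \<in> U" for b
  proof -
    have "- b \<in> Sp1xSp1 \<longleftrightarrow> b \<in> Sp1xSp1" by (metis minus_minus neg_C)
    moreover have "dist (- a) (- b) = dist a b" by (rule dist_minus)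
    ultimately show ?thesis by (simp add: U_def U2_def)
  qed
  have Uo: "openin (top_of_set Sp1xSp1) U" "openin (top_of_set Sp1xSp1) U2"
    by (auto simp: U_def U2_def openin_open_Int)
  have aU: "a \<in> U" using a by (simp add: U_def)
  have img2: "pcov ` U2 = pcov ` U"
  proof -
    have "U2 = uminus ` U"
    proof
      show "U2 \<subseteq> uminus ` U"
      proof
        fix b assume "b \<in> U2"
        then have "- b \<in> U" using negU[of "- b"] by simp
        then show "b \<in> uminus ` U" by (rule rev_image_eqI) simp
      qed
      show "uminus ` U \<subseteq> U2" using negU by blast
    qed
    then show ?thesis by (simp add: image_comp o_def pcov_neg)
  qed
  show "\<exists>T. x \<in> T \<and> openin (top_of_set SO4) T \<and>
          (\<exists>v. \<Union>v = Sp1xSp1 \<inter> pcov -` T \<and> (\<forall>u\<in>v. openin (top_of_set Sp1xSp1) u) \<and>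
               pairwise disjnt v \<and> (\<forall>u\<in>v. \<exists>q. homeomorphism u T pcov q))"
  proof (intro exI conjI)
    show "x \<in> pcov ` U" using aU a by blast
    show "openin (top_of_set SO4) (pcov ` U)" by (rule pcov_open_map[OF Uo(1)])
    show "\<Union>{U, U2} = Sp1xSp1 \<inter> pcov -` pcov ` U"
    proof
      have "U \<subseteq> Sp1xSp1" "U2 \<subseteq> Sp1xSp1" by (auto simp: U_def U2_def)
      moreover have "pcov ` U2 \<subseteq> pcov ` U" using img2 by simp
      ultimately show "\<Union>{U, U2} \<subseteq> Sp1xSp1 \<inter> pcov -` pcov ` U" by blast
      show "Sp1xSp1 \<inter> pcov -` pcov ` U \<subseteq> \<Union>{U, U2}"
      proof
        fix b assume "b \<in> Sp1xSp1 \<inter> pcov -` pcov ` U"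
        then obtain u where u: "u \<in> U" "pcov b = pcov u" "b \<in> Sp1xSp1" by auto
        have "u \<in> Sp1xSp1" using u(1) by (simp add: U_def)
        then have "b = u \<or> b = - u" using pcov_eq[of u b] u by metis
        then show "b \<in> \<Union>{U, U2}"
        proof
          assume "b = u" then show ?thesis using u by simp
        next
          assume "b = - u" then have "b \<in> U2" using negU[of u] u(1) by simp
          then show ?thesis by simp
        qed
      qed
    qed
    show "\<forall>u\<in>{U, U2}. openin (top_of_set Sp1xSp1) u" using Uo by auto
    show "pairwise disjnt {U, U2}" using disj by (auto simp: pairwise_def disjnt_def)
    show "\<forall>u\<in>{U, U2}. \<exists>q. homeomorphism u (pcov ` U) pcov q"
    proof safe
      show "\<exists>q. homeomorphism U (pcov ` U) pcov q"
        by (rule hom_piece[OF Uo(1)]) (use disj negU in blast)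
      show "\<exists>q. homeomorphism U2 (pcov ` U) pcov q"
        unfolding img2[symmetric] by (rule hom_piece[OF Uo(2)]) (use disj negU in blast)
    qed
  qed
qed


lemma X0_iff: "a \<in> X0 \<longleftrightarrow> fst a = qone \<and> snd a $ 3 = 0 \<and> norm (snd a) = 1"
proof
  assume "a \<in> X0"
  then obtain x y z where "a = (quat 1 0 0 0, quat x y 0 z)" "x\<^sup>2 + y\<^sup>2 + z\<^sup>2 = 1" by (auto simp: X0_def)
  then show "fst a = qone \<and> snd a $ 3 = 0 \<and> norm (snd a) = 1" by (simp add: qone_def norm1_iff)
next
  assume h: "fst a = qone \<and> snd a $ 3 = 0 \<and> norm (snd a) = 1"
  have "a = (quat 1 0 0 0, quat (snd a $ 1) (snd a $ 2) 0 (snd a $ 4))"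
    using h by (simp add: prod_eq_iff qone_def quat_eq_iff)
  moreover have "(snd a $ 1)\<^sup>2 + (snd a $ 2)\<^sup>2 + (snd a $ 4)\<^sup>2 = 1"
  proof -
    have "snd a $ 3 = 0" "norm (snd a) = 1" using h by auto
    then show ?thesis by (simp add: norm1_iff)
  qed
  ultimately show "a \<in> X0" unfolding X0_def by blast
qed

lemma Y0_iff_neg: "a \<in> Y0 \<longleftrightarrow> - a \<in> X0"
proof -
  have "(\<lambda>(u, v). (- u, - v)) = (uminus :: (real^4) \<times> (real^4) \<Rightarrow> _)" by (auto simp: fun_eq_iff)
  then have "Y0 = uminus ` X0" by (simp add: Y0_def)
  show ?thesis
  proof
    assume "a \<in> Y0" then obtain b where "b \<in> X0" "a = - b" using \<open>Y0 = uminus ` X0\<close> by blast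
    then show "- a \<in> X0" by simp
  next
    assume "- a \<in> X0" then have "- (- a) \<in> uminus ` X0" by blast
    then show "a \<in> Y0" using \<open>Y0 = uminus ` X0\<close> by simp
  qed
qed

lemma Y0_iff: "a \<in> Y0 \<longleftrightarrow> fst a = - qone \<and> snd a $ 3 = 0 \<and> norm (snd a) = 1"
proof -
  have "(- fst a = qone) = (fst a = - qone)" by (metis minus_minus)
  then show ?thesis unfolding Y0_iff_neg X0_iff by simp
qed

lemma X0_C: "a \<in> X0 \<Longrightarrow> a \<in> Sp1xSp1" and Y0_C: "a \<in> Y0 \<Longrightarrow> a \<in> Sp1xSp1"
  by (simp_all add: X0_iff Y0_iff inC)

lemma XY_disj: "a \<in> X0 \<Longrightarrow> a \<notin> Y0"
proof
  assume "a \<in> X0" "a \<in> Y0"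
  then have "qone = - qone" by (simp add: X0_iff Y0_iff)
  then show False by (simp add: quat_eq_iff)
qed

lemma fix_T:
  assumes a: "a \<in> Sp1xSp1" and t: "Tmap a = a"
  shows "a \<in> X0 \<or> a \<in> Y0"
proof -
  have e: "qconj (fst a) = fst a" "jc (snd a) = snd a" using t by (simp_all add: Tmap_explicit prod_eq_iff)
  then have z: "fst a $ 2 = 0" "fst a $ 3 = 0" "fst a $ 4 = 0" "snd a $ 3 = 0" by (simp_all add: quat_eq_iff)
  have "(fst a $ 1)\<^sup>2 = 1" using a z by (simp add: inC norm1_iff)
  then have "fst a $ 1 = 1 \<or> fst a $ 1 = -1" by (simp add: power2_eq_1_iff)
  then have "fst a = qone \<or> fst a = - qone" using z by (auto simp: quat_eq_iff)
  then show ?thesis using a z by (auto simp: X0_iff Y0_iff inC)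
qed

lemma XY_fix: "a \<in> X0 \<or> a \<in> Y0 \<Longrightarrow> Tmap a = a"
  by (auto simp: X0_iff Y0_iff Tmap_explicit prod_eq_iff quat_eq_iff)

lemma continuous_Tmap[continuous_intros]:
  "continuous_on S f \<Longrightarrow> continuous_on S (\<lambda>x. Tmap (f x))"
  unfolding Tmap_explicit jc_def by (intro continuous_intros)

lemma lift_C: "is_lift L W \<Longrightarrow> L k \<in> Sp1xSp1" and lift_pcov: "is_lift L W \<Longrightarrow> pcov (L k) = W k"
  by (simp_all add: is_lift_def)

lemma lift_cont: "is_lift L W \<Longrightarrow> continuous_on UNIV L"
  by (simp add: is_lift_def)

lemma lift_W_cont: "is_lift L W \<Longrightarrow> continuous_on UNIV W"
proof -
  assume l: "is_lift L W"
  have "continuous_on UNIV (pcov \<circ> L)"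
    by (rule continuous_on_compose[OF lift_cont[OF l] continuous_on_subset[OF continuous_pcov]])
       (use lift_C[OF l] in auto)
  moreover have "pcov \<circ> L = W" using lift_pcov[OF l] by auto
  ultimately show ?thesis by simp
qed

lemma lift_neg: "is_lift L W \<Longrightarrow> is_lift (\<lambda>k. - L k) W"
  unfolding is_lift_def by (auto intro: continuous_intros simp: neg_C pcov_neg)

lemma lift_unique:
  assumes l: "is_lift L W" and m: "is_lift M W" and e: "L a = M a"
  shows "L x = M x"
  apply (rule covering_space_lift_unique[OF pcov_covering, where T=UNIV and f=W and a=a])
  using l m lift_W_cont[OF l] e by (auto simp: is_lift_def) (metis pcov_SO4)

lemma lift_pm:
  assumes l: "is_lift L W" and m: "is_lift M W"
  shows "(\<forall>k. M k = L k) \<or> (\<forall>k. M k = - L k)"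
proof -
  have "M 0 = L 0 \<or> M 0 = - L 0" using pcov_eq[OF lift_C[OF l] lift_C[OF m]] lift_pcov[OF l] lift_pcov[OF m] by simp
  then show ?thesis
  proof
    assume "M 0 = L 0" then show ?thesis using lift_unique[OF l m] by metis
  next
    assume "M 0 = - L 0" then show ?thesis using lift_unique[OF lift_neg[OF l] m] by metis
  qed
qed

lemma nonneg_pair: "a \<in> Sp1xSp1 \<Longrightarrow> a \<noteq> - a"
proof
  assume a: "a \<in> Sp1xSp1" and e: "a = - a"
  then have "fst a = - fst a" by (metis fst_uminus)
  then have "fst a + fst a = 0" by (metis add.right_inverse)
  then have "2 *\<^sub>R fst a = 0" by (simp add: scaleR_2)
  then have "fst a = 0" by simp
  then show False using a by (simp add: inC)
qed

lemma lift_per: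
  assumes W: "symmetric_loop W" and nh: "nullhomotopic_SO4 W" and l: "is_lift L W"
  shows "L (k + 2 * pi) = L k"
proof -
  define M where "M = (\<lambda>k. L (k + 2 * pi))"
  have m: "is_lift M W"
    unfolding is_lift_def M_def
  proof (intro conjI allI)
    show "continuous_on UNIV (\<lambda>k. L (k + 2 * pi))"
      by (rule continuous_on_compose2[OF lift_cont[OF l]]) (auto intro: continuous_intros)
  qed (use l W in \<open>auto simp: is_lift_def symmetric_loop_def\<close>)
  define g where "g = (\<lambda>t. W (2 * pi * t))"
  obtain a where "a \<in> SO4" and hom: "homotopic_loops SO4 g (linepath a a)"
    using nh by (auto simp: nullhomotopic_SO4_def g_def)
  have hp: "homotopic_paths SO4 g (linepath (pathstart g) (pathstart g))"
    by (rule homotopic_loops_imp_homotopic_paths_null[OF hom])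
  have cW: "continuous_on UNIV W" using lift_W_cont[OF l] .
  have pg: "path g" unfolding path_def g_def
    by (rule continuous_on_compose2[OF cW]) (auto intro: continuous_intros)
  have WS: "\<And>k. W k \<in> SO4" using W by (simp add: symmetric_loop_def)
  have "pathfinish (\<lambda>t. L (2 * pi * t)) = pathfinish (linepath (L 0) (L 0))"
  proof (rule covering_space_monodromy[OF pcov_covering pg _ _ _ hp])
    show "path_image g \<subseteq> SO4" using WS by (auto simp: path_image_def g_def)
    show "path (linepath (pathstart g) (pathstart g))" by simp
    show "path_image (linepath (pathstart g) (pathstart g)) \<subseteq> SO4" using WS by (simp add: pathstart_def g_def)
    show "path (\<lambda>t. L (2 * pi * t))" unfolding path_def
      by (rule continuous_on_compose2[OF lift_cont[OF l]]) (auto intro: continuous_intros)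
    show "path_image (\<lambda>t. L (2 * pi * t)) \<subseteq> Sp1xSp1" using lift_C[OF l] by (auto simp: path_image_def)
    show "\<And>t. t \<in> {0..1} \<Longrightarrow> pcov (L (2 * pi * t)) = g t" using lift_pcov[OF l] by (simp add: g_def)
    show "path (linepath (L 0) (L 0))" by simp
    show "path_image (linepath (L 0) (L 0)) \<subseteq> Sp1xSp1" using lift_C[OF l] by simp
    show "\<And>t. t \<in> {0..1} \<Longrightarrow> pcov (linepath (L 0) (L 0) t) = linepath (pathstart g) (pathstart g) t"
      using lift_pcov[OF l] by (simp add: linepath_refl pathstart_def g_def)
    show "pathstart (\<lambda>t. L (2 * pi * t)) = pathstart (linepath (L 0) (L 0))" by (simp add: pathstart_def)
  qed
  then have "M 0 = L 0" by (simp add: pathfinish_def M_def)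
  then have "M k = L k" using lift_unique[OF m l] by metis
  then show ?thesis by (simp add: M_def)
qed

lemma minv_orth: "orthogonal_matrix (A::real^'n^'n) \<Longrightarrow> matrix_inv A = transpose A"
  using matrix_inv_eqI[of A "transpose A"] by (simp add: orthogonal_matrix_def)

lemma minv_SO4_inj: "A \<in> SO4 \<Longrightarrow> B \<in> SO4 \<Longrightarrow> matrix_inv A = matrix_inv B \<Longrightarrow> A = B"
proof -
  assume a: "A \<in> SO4" and b: "B \<in> SO4" and e: "matrix_inv A = matrix_inv B"
  have "orthogonal_matrix A" "orthogonal_matrix B" using a b by (simp_all add: SO4_def)
  then have "transpose A = transpose B" using e minv_orth by metis
  then have "transpose (transpose A) = transpose (transpose B)" by simp
  then show "A = B" by (simp only: transpose_transpose)
qed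

lemma sym_lift:
  assumes W: "symmetric_loop W" and l: "is_lift L W"
  shows "is_lift (\<lambda>k. Tmap (L (- k))) W"
  unfolding is_lift_def
proof (intro conjI allI)
  show "continuous_on UNIV (\<lambda>k. Tmap (L (- k)))"
    by (intro continuous_intros continuous_on_compose2[OF lift_cont[OF l]]) auto
  fix k
  show "Tmap (L (- k)) \<in> Sp1xSp1" using lift_C[OF l] Tmap_C by blast
  have "matrix_inv (pcov (Tmap (L (- k)))) = wmat ** W (- k) ** matrix_inv wmat"
    using sym_key[OF lift_C[OF l]] lift_pcov[OF l] by metis
  also have "\<dots> = matrix_inv (W k)" using W by (simp add: symmetric_loop_def)
  finally have e: "matrix_inv (pcov (Tmap (L (- k)))) = matrix_inv (W k)" .
  have "pcov (Tmap (L (- k))) \<in> SO4" using pcov_SO4 lift_C[OF l] Tmap_C by blast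
  moreover have "W k \<in> SO4" using W by (simp add: symmetric_loop_def)
  ultimately show "pcov (Tmap (L (- k))) = W k" using minv_SO4_inj e by blast
qed

lemma sym_lift_eq:
  assumes W: "symmetric_loop W" and l: "is_lift L W" and t: "Tmap (L 0) = L 0"
  shows "Tmap (L (- k)) = L k"
  using lift_unique[OF sym_lift[OF W l] l, of 0 k] t by simp


definition phi :: "real \<Rightarrow> real" where "phi k = arccos (cos k) / pi"

definition fold :: "(real \<Rightarrow> (real^4) \<times> (real^4)) \<Rightarrow> real \<Rightarrow> (real^4) \<times> (real^4)" where
  "fold g k = (if sin k \<le> 0 then Tmap (g (phi k)) else g (phi k))"

lemma phi_range: "0 \<le> phi k" "phi k \<le> 1"
  using arccos_bounded[of "cos k"] by (simp_all add: phi_def divide_simps)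

lemma phi_cont: "continuous_on UNIV phi"
  unfolding phi_def by (intro continuous_intros) auto

lemma phi_sin0: "sin k = 0 \<Longrightarrow> phi k = 0 \<or> phi k = 1"
proof -
  assume "sin k = 0"
  then have "(cos k)\<^sup>2 = 1" using sin_cos_squared_add[of k] by simp
  then have "cos k = 1 \<or> cos k = -1" by (simp add: power2_eq_1_iff)
  then show ?thesis by (auto simp: phi_def)
qed

lemma phi_neg: "phi (- k) = phi k" by (simp add: phi_def)
lemma phi_per: "phi (k + 2 * pi) = phi k" by (simp add: phi_def)

lemma fold_per: "fold g (k + 2 * pi) = fold g k"
  by (simp add: fold_def phi_per)

lemma fold_sym:
  assumes "Tmap (g 0) = g 0" "Tmap (g 1) = g 1"
  shows "fold g (- k) = Tmap (fold g k)"
proof (cases "sin k = 0")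
  case True
  then have "Tmap (g (phi k)) = g (phi k)" using phi_sin0[of k] assms by auto
  then show ?thesis using True by (simp add: fold_def phi_neg)
next
  case False
  then show ?thesis by (auto simp: fold_def phi_neg)
qed

lemma fold_C: "(\<And>s. 0 \<le> s \<Longrightarrow> s \<le> 1 \<Longrightarrow> g s \<in> Sp1xSp1) \<Longrightarrow> fold g k \<in> Sp1xSp1"
  using phi_range[of k] Tmap_C by (simp add: fold_def)

lemma symmetric_homotopy_I:
  assumes cont: "continuous_on (UNIV \<times> {0..1}) H"
    and so: "\<And>k t. t \<in> {0..1} \<Longrightarrow> H (k, t) \<in> SO4"
    and per: "\<And>k t. t \<in> {0..1} \<Longrightarrow> H (k + 2 * pi, t) = H (k, t)"
    and sym: "\<And>k t. t \<in> {0..1} \<Longrightarrow> wmat ** H (k, t) ** matrix_inv wmat = matrix_inv (H (- k, t))"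
  shows "symmetric_homotopy H"
  unfolding symmetric_homotopy_def symmetric_loop_def
proof (intro conjI ballI allI cont)
  fix t :: real assume t: "t \<in> {0..1}"
  show "continuous_on UNIV (\<lambda>k. H (k, t))"
    by (rule continuous_on_compose2[OF cont]) (use t in \<open>auto intro: continuous_intros\<close>)
qed (use so per sym in auto)

lemma fold_homotopy:
  fixes g :: "real \<times> real \<Rightarrow> (real^4) \<times> (real^4)"
  assumes cont: "continuous_on ({0..1} \<times> {0..1}) g"
    and img: "\<And>z. z \<in> {0..1} \<times> {0..1} \<Longrightarrow> g z \<in> Sp1xSp1"
    and ends: "\<And>t. t \<in> {0..1} \<Longrightarrow> Tmap (g (t, 0)) = g (t, 0) \<and> Tmap (g (t, 1)) = g (t, 1)"
  shows "symmetrically_homotopic (\<lambda>k. pcov (fold (\<lambda>s. g (0, s)) k)) (\<lambda>k. pcov (fold (\<lambda>s. g (1, s)) k))"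
proof -
  define F where "F = (\<lambda>z::real\<times>real. fold (\<lambda>s. g (snd z, s)) (fst z))"
  define D where "D = (UNIV :: real set) \<times> {0..1::real}"
  have FC: "z \<in> D \<Longrightarrow> F z \<in> Sp1xSp1" for z
    unfolding F_def D_def by (rule fold_C) (use img in \<open>auto simp: mem_Times_iff\<close>)
  have cG: "continuous_on D (\<lambda>z. g (snd z, phi (fst z)))"
    unfolding D_def
    by (rule continuous_on_compose2[OF cont])
       (auto intro!: continuous_intros continuous_on_compose2[OF phi_cont] simp: phi_range mem_Times_iff)
  have cF: "continuous_on D F"
  proof -
    have "continuous_on D (\<lambda>z. if sin (fst z) \<le> 0 then Tmap (g (snd z, phi (fst z))) else g (snd z, phi (fst z)))"
    proof (rule continuous_on_cases_le)
      show "continuous_on {z \<in> D. sin (fst z) \<le> 0} (\<lambda>z. Tmap (g (snd z, phi (fst z))))"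
        by (intro continuous_intros continuous_on_subset[OF cG]) auto
      show "continuous_on {z \<in> D. 0 \<le> sin (fst z)} (\<lambda>z. g (snd z, phi (fst z)))"
        by (intro continuous_on_subset[OF cG]) auto
      show "continuous_on D (\<lambda>z. sin (fst z))" by (intro continuous_intros)
      fix z assume z: "z \<in> D" "sin (fst z) = 0"
      then show "Tmap (g (snd z, phi (fst z))) = g (snd z, phi (fst z))"
        using phi_sin0[of "fst z"] ends[of "snd z"] by (auto simp: D_def mem_Times_iff)
    qed
    then show ?thesis by (simp add: F_def fold_def)
  qed
  define H where "H = (\<lambda>z. pcov (F z))"
  have cH: "continuous_on D H"
    unfolding H_def by (rule continuous_on_compose2[OF continuous_pcov cF]) (use FC in auto)
  have sH: "symmetric_homotopy H"
  proof (rule symmetric_homotopy_I)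
    show "continuous_on (UNIV \<times> {0..1}) H" using cH by (simp add: D_def)
    fix k t :: real assume t: "t \<in> {0..1}"
    have zD: "(k, t) \<in> D" "(- k, t) \<in> D" using t by (auto simp: D_def)
    show "H (k, t) \<in> SO4" using FC[OF zD(1)] pcov_SO4 by (simp add: H_def)
    show "H (k + 2 * pi, t) = H (k, t)" by (simp add: H_def F_def fold_per)
    have "F (- k, t) = Tmap (F (k, t))" unfolding F_def using ends[OF t] by (simp add: fold_sym)
    then show "wmat ** H (k, t) ** matrix_inv wmat = matrix_inv (H (- k, t))"
      using sym_key[OF FC[OF zD(1)]] by (simp add: H_def)
  qed
  show ?thesis unfolding symmetrically_homotopic_def
    by (intro exI[of _ H] conjI sH) (simp_all add: H_def F_def)
qed

lemma symhom_trans: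
  assumes "symmetrically_homotopic A B" "symmetrically_homotopic B C"
  shows "symmetrically_homotopic A C"
proof -
  obtain H1 where h1: "symmetric_homotopy H1" "\<And>k. H1 (k, 0) = A k" "\<And>k. H1 (k, 1) = B k"
    using assms(1) by (auto simp: symmetrically_homotopic_def)
  obtain H2 where h2: "symmetric_homotopy H2" "\<And>k. H2 (k, 0) = B k" "\<And>k. H2 (k, 1) = C k"
    using assms(2) by (auto simp: symmetrically_homotopic_def)
  define H where "H = (\<lambda>z::real\<times>real. if snd z \<le> 1/2 then H1 (fst z, 2 * snd z) else H2 (fst z, 2 * snd z - 1))"
  have c1: "continuous_on (UNIV \<times> {0..1}) H1" and c2: "continuous_on (UNIV \<times> {0..1}) H2"
    using h1 h2 by (simp_all add: symmetric_homotopy_def)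
  have "continuous_on (UNIV \<times> {0..1}) H"
    unfolding H_def
  proof (rule continuous_on_cases_le)
    show "continuous_on {z \<in> UNIV \<times> {0..1}. snd z \<le> 1/2} (\<lambda>z. H1 (fst z, 2 * snd z))"
      by (rule continuous_on_compose2[OF c1]) (auto intro!: continuous_intros simp: mem_Times_iff)
    show "continuous_on {z \<in> UNIV \<times> {0..1}. 1/2 \<le> snd z} (\<lambda>z. H2 (fst z, 2 * snd z - 1))"
      by (rule continuous_on_compose2[OF c2]) (auto intro!: continuous_intros simp: mem_Times_iff)
    show "continuous_on (UNIV \<times> {0..1}) (\<lambda>z::real\<times>real. snd z)" by (intro continuous_intros)
    fix z :: "real \<times> real" assume "snd z = 1/2"
    then have "2 * snd z = 1" "2 * snd z - 1 = 0" by simp_all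
    then show "H1 (fst z, 2 * snd z) = H2 (fst z, 2 * snd z - 1)" using h1(3) h2(2) by (simp only:)
  qed
  moreover have "symmetric_loop (\<lambda>k. H (k, t))" if t: "t \<in> {0..1}" for t
  proof (cases "t \<le> 1/2")
    case True
    then have "(\<lambda>k. H (k, t)) = (\<lambda>k. H1 (k, 2 * t))" by (simp add: H_def)
    moreover have "2 * t \<in> {0..1}" using t True by auto
    ultimately show ?thesis using h1(1) by (simp add: symmetric_homotopy_def)
  next
    case False
    then have "(\<lambda>k. H (k, t)) = (\<lambda>k. H2 (k, 2 * t - 1))" by (simp add: H_def)
    moreover have "2 * t - 1 \<in> {0..1}" using t False by auto
    ultimately show ?thesis using h2(1) by (simp add: symmetric_homotopy_def)
  qed
  ultimately have "symmetric_homotopy H" by (simp add: symmetric_homotopy_def)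
  moreover have "H (k, 0) = A k" "H (k, 1) = C k" for k by (simp_all add: H_def h1 h2)
  ultimately show ?thesis unfolding symmetrically_homotopic_def by blast
qed


lemma fold_cong: "(\<And>s. 0 \<le> s \<Longrightarrow> s \<le> 1 \<Longrightarrow> g s = g' s) \<Longrightarrow> fold g k = fold g' k"
  using phi_range[of k] by (simp add: fold_def)

lemma angle_pos:
  assumes "0 \<le> sin k"
  shows "\<exists>n::int. k = arccos (cos k) + of_int n * 2 * pi"
proof -
  define a where "a = arccos (cos k)"
  have ca: "cos a = cos k" by (simp add: a_def)
  have "sin a = sqrt (1 - (cos k)\<^sup>2)" by (simp add: a_def sin_arccos)
  also have "\<dots> = sqrt ((sin k)\<^sup>2)" by (simp add: sin_squared_eq)
  also have "\<dots> = sin k" using assms by simp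
  finally have sa: "sin a = sin k" .
  have "cos (k - a) = 1" by (simp add: cos_diff ca sa)
  then obtain n :: int where "k - a = of_int n * 2 * pi" using cos_one_2pi_int by blast
  then show ?thesis by (intro exI[of _ n]) (simp add: a_def algebra_simps)
qed

lemma angle_neg:
  assumes "sin k \<le> 0"
  shows "\<exists>n::int. k = - arccos (cos k) + of_int n * 2 * pi"
proof -
  define a where "a = arccos (cos k)"
  have ca: "cos a = cos k" by (simp add: a_def)
  have "sin a = sqrt (1 - (cos k)\<^sup>2)" by (simp add: a_def sin_arccos)
  also have "\<dots> = sqrt ((sin k)\<^sup>2)" by (simp add: sin_squared_eq)
  also have "\<dots> = - sin k" using assms by simp
  finally have sa: "sin a = - sin k" .
  have "cos (k + a) = 1" by (simp add: cos_add ca sa)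
  then obtain n :: int where "k + a = of_int n * 2 * pi" using cos_one_2pi_int by blast
  then show ?thesis by (intro exI[of _ n]) (simp add: a_def algebra_simps)
qed

lemma per_nat:
  assumes p: "\<And>k. L (k + 2 * pi) = L k"
  shows "L (k + of_nat m * 2 * pi) = L k"
proof (induction m)
  case 0 then show ?case by simp
next
  case (Suc m)
  have e: "k + of_nat (Suc m) * 2 * pi = (k + of_nat m * 2 * pi) + 2 * pi" by (simp add: algebra_simps)
  have "L ((k + of_nat m * 2 * pi) + 2 * pi) = L (k + of_nat m * 2 * pi)" by (rule p)
  then show ?case unfolding e using Suc.IH by simp
qed

lemma per_int:
  assumes p: "\<And>k. L (k + 2 * pi) = L k"
  shows "L (k + of_int n * 2 * pi) = L k"
proof (cases "n \<ge> 0")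
  case True
  then obtain m where m: "n = int m" by (metis nonneg_int_cases)
  show ?thesis using per_nat[where L=L, OF p, of k m] by (simp add: m)
next
  case False
  then obtain m where m: "n = - int m" by (metis nonneg_int_cases neg_0_le_iff_le linorder_not_le less_imp_le minus_minus)
  then have e: "(k + of_int n * 2 * pi) + of_nat m * 2 * pi = k" by (simp add: m)
  have "L ((k + of_int n * 2 * pi) + of_nat m * 2 * pi) = L (k + of_int n * 2 * pi)"
    by (rule per_nat[where L=L, OF p])
  then show ?thesis unfolding e by simp
qed

lemma fold_lift:
  assumes W: "symmetric_loop W" and l: "is_lift L W" and t: "Tmap (L 0) = L 0"
    and p: "\<And>k. L (k + 2 * pi) = L k"
  shows "fold (\<lambda>s. L (pi * s)) k = L k"
proof -
  have pp: "pi * phi k = arccos (cos k)" by (simp add: phi_def)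
  show ?thesis
  proof (cases "sin k \<le> 0")
    case True
    obtain n :: int where n: "k = - arccos (cos k) + of_int n * 2 * pi" using angle_neg[OF True] by blast
    have "fold (\<lambda>s. L (pi * s)) k = Tmap (L (arccos (cos k)))" using True by (simp add: fold_def pp)
    also have "\<dots> = L (- arccos (cos k))" using sym_lift_eq[OF W l t, of "- arccos (cos k)"] by simp
    also have "\<dots> = L k" using per_int[where L=L, OF p, of "- arccos (cos k)" n] n by simp
    finally show ?thesis .
  next
    case False
    obtain n :: int where n: "k = arccos (cos k) + of_int n * 2 * pi" using angle_pos[of k] False by auto
    have "fold (\<lambda>s. L (pi * s)) k = L (arccos (cos k))" using False by (simp add: fold_def pp)
    also have "\<dots> = L k" using per_int[where L=L, OF p, of "arccos (cos k)" n] n by simp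
    finally show ?thesis .
  qed
qed


lemma two_valued:
  fixes f :: "real \<Rightarrow> real^4"
  assumes cf: "continuous_on {0..1} f" and v: "\<And>t. t \<in> {0..1} \<Longrightarrow> f t = c \<or> f t = - c" and c: "c \<noteq> 0"
  shows "f 1 = f 0"
proof (rule ccontr)
  assume ne: "f 1 \<noteq> f 0"
  define h where "h = (\<lambda>t. f t \<bullet> c)"
  have ch: "continuous_on {0..1} h" unfolding h_def by (intro continuous_intros cf)
  have con: "connected (h ` {0..1})" by (rule connected_continuous_image[OF ch]) simp
  have cc: "c \<bullet> c > 0" using c by simp
  have hv: "h t = c \<bullet> c \<or> h t = - (c \<bullet> c)" if "t \<in> {0..1}" for t
    using v[OF that] by (auto simp: h_def)
  have "f 1 = - f 0" using v[of 0] v[of 1] ne by auto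
  then have "h 1 = - h 0" by (simp add: h_def)
  moreover have "h 0 \<in> h ` {0..1}" "h 1 \<in> h ` {0..1}" by auto
  moreover have "h 0 \<noteq> 0" using hv[of 0] cc by auto
  ultimately have "0 \<in> h ` {0..1}" using con unfolding connected_iff_interval
    by (metis linorder_le_cases neg_0_le_iff_le neg_le_0_iff_le)
  then show False using hv cc by fastforce
qed

lemma only_if:
  assumes W: "symmetric_loop W" and nh: "nullhomotopic_SO4 W" and l: "is_lift L W"
    and x: "L 0 \<in> X0" and h: "symmetrically_homotopic W (\<lambda>k. mat 1)"
  shows "L pi \<in> X0"
proof -
  obtain H where H: "symmetric_homotopy H" "\<And>k. H (k, 0) = W k" "\<And>k. H (k, 1) = mat 1"
    using h by (auto simp: symmetrically_homotopic_def)
  define D where "D = (UNIV :: real set) \<times> {0..1::real}"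
  have cH: "continuous_on D H" using H(1) by (simp add: symmetric_homotopy_def D_def)
  have sl: "\<And>t. t \<in> {0..1} \<Longrightarrow> symmetric_loop (\<lambda>k. H (k, t))" using H(1) by (simp add: symmetric_homotopy_def)
  have HS: "\<And>z. z \<in> D \<Longrightarrow> H z \<in> SO4" using sl by (auto simp: D_def symmetric_loop_def mem_Times_iff)
  have t0: "Tmap (L 0) = L 0" using x XY_fix by blast
  have Lp: "\<And>k. L (k + 2 * pi) = L k" using lift_per[OF W nh l] .
  obtain K where cK: "continuous_on D K" and KC: "K \<in> D \<rightarrow> Sp1xSp1"
      and K0: "\<And>y. K (y, 0) = L y" and HK: "\<And>z. z \<in> D \<Longrightarrow> H z = pcov (K z)"
  proof (rule covering_space_lift_homotopy_alt[OF pcov_covering, of UNIV H L])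
    show "continuous_on (UNIV \<times> {0..1}) H" using cH by (simp add: D_def)
    show "H \<in> UNIV \<times> {0..1} \<rightarrow> SO4" using HS by (auto simp: D_def)
    show "\<And>y. y \<in> UNIV \<Longrightarrow> H (y, 0) = pcov (L y)" using H(2) lift_pcov[OF l] by simp
    show "continuous_on UNIV L" using lift_cont[OF l] .
    show "L \<in> UNIV \<rightarrow> Sp1xSp1" using lift_C[OF l] by simp
  qed (auto simp: D_def)
  have KC': "\<And>z. z \<in> D \<Longrightarrow> K z \<in> Sp1xSp1" using KC by auto
  have conD: "connected D" unfolding D_def by (intro connected_Times) auto
  have z0: "(0, 0) \<in> D" by (simp add: D_def)
  have Dm: "\<And>k t. (k, t) \<in> D \<longleftrightarrow> t \<in> {0..1}" by (simp add: D_def)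
  have per: "K (k + 2 * pi, t) = K (k, t)" if t: "t \<in> {0..1}" for k t
  proof -
    define g1 where "g1 = (\<lambda>z::real\<times>real. K (fst z + 2 * pi, snd z))"
    have cg1: "continuous_on D g1" unfolding g1_def
      by (rule continuous_on_compose2[OF cK]) (auto intro!: continuous_intros simp: D_def mem_Times_iff)
    have "g1 (k, t) = K (k, t)"
    proof (rule covering_space_lift_unique[OF pcov_covering, where T=D and f=H and a="(0,0)"])
      show "g1 (0, 0) = K (0, 0)" using Lp[of 0] by (simp add: g1_def K0)
      show "continuous_on D H" by (rule cH)
      show "H \<in> D \<rightarrow> SO4" using HS by auto
      show "continuous_on D g1" by (rule cg1)
      show "g1 \<in> D \<rightarrow> Sp1xSp1" using KC' by (auto simp: g1_def D_def mem_Times_iff)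
      show "\<And>z. z \<in> D \<Longrightarrow> H z = pcov (g1 z)"
      proof -
        fix z assume z: "z \<in> D"
        then have "H (fst z + 2 * pi, snd z) = H (fst z, snd z)" using sl[of "snd z"]
          by (auto simp: D_def mem_Times_iff symmetric_loop_def)
        then show "H z = pcov (g1 z)" using HK[of "(fst z + 2 * pi, snd z)"] z by (auto simp: g1_def D_def mem_Times_iff)
      qed
      show "continuous_on D K" by (rule cK)
      show "K \<in> D \<rightarrow> Sp1xSp1" by (rule KC)
      show "\<And>z. z \<in> D \<Longrightarrow> H z = pcov (K z)" by (rule HK)
    qed (use conD z0 t in \<open>auto simp: D_def\<close>)
    then show ?thesis by (simp add: g1_def)
  qed
  have sym: "Tmap (K (- k, t)) = K (k, t)" if t: "t \<in> {0..1}" for k t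
  proof -
    define g1 where "g1 = (\<lambda>z::real\<times>real. Tmap (K (- fst z, snd z)))"
    have cg1: "continuous_on D g1" unfolding g1_def
      by (intro continuous_intros continuous_on_compose2[OF cK]) (auto intro!: continuous_intros simp: D_def mem_Times_iff)
    have "g1 (k, t) = K (k, t)"
    proof (rule covering_space_lift_unique[OF pcov_covering, where T=D and f=H and a="(0,0)"])
      show "g1 (0, 0) = K (0, 0)" using t0 by (simp add: g1_def K0)
      show "continuous_on D H" by (rule cH)
      show "H \<in> D \<rightarrow> SO4" using HS by auto
      show "continuous_on D g1" by (rule cg1)
      show "g1 \<in> D \<rightarrow> Sp1xSp1" using KC' Tmap_C by (auto simp: g1_def D_def mem_Times_iff)
      show "\<And>z. z \<in> D \<Longrightarrow> H z = pcov (g1 z)"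
      proof -
        fix z :: "real \<times> real" assume z: "z \<in> D"
        obtain a b where ab: "z = (a, b)" by (cases z)
        have b: "b \<in> {0..1}" using z ab by (simp add: D_def)
        have KC2: "K (- a, b) \<in> Sp1xSp1" using KC' b by (simp add: Dm)
        have "matrix_inv (pcov (Tmap (K (- a, b)))) = wmat ** H (- a, b) ** matrix_inv wmat"
          using sym_key[OF KC2] HK[of "(- a, b)"] b by (simp add: Dm)
        also have "\<dots> = matrix_inv (H (a, b))" using sl[OF b] by (simp add: symmetric_loop_def)
        finally have e: "matrix_inv (pcov (Tmap (K (- a, b)))) = matrix_inv (H (a, b))" .
        have "pcov (Tmap (K (- a, b))) \<in> SO4" using pcov_SO4 Tmap_C KC2 by blast
        moreover have "H (a, b) \<in> SO4" using HS b by (simp add: Dm)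
        ultimately have "pcov (Tmap (K (- a, b))) = H (a, b)" using minv_SO4_inj e by blast
        then show "H z = pcov (g1 z)" by (simp add: ab g1_def)
      qed
      show "continuous_on D K" by (rule cK)
      show "K \<in> D \<rightarrow> Sp1xSp1" by (rule KC)
      show "\<And>z. z \<in> D \<Longrightarrow> H z = pcov (K z)" by (rule HK)
    qed (use conD z0 t in \<open>auto simp: D_def\<close>)
    then show ?thesis by (simp add: g1_def)
  qed
  have fixpi: "Tmap (K (pi, t)) = K (pi, t)" if t: "t \<in> {0..1}" for t
    using sym[OF t, of pi] per[OF t, of "- pi"] by simp
  have fix0: "Tmap (K (0, t)) = K (0, t)" if t: "t \<in> {0..1}" for t
    using sym[OF t, of 0] by simp
  have pm: "fst (K (k, t)) = qone \<or> fst (K (k, t)) = - qone" if "t \<in> {0..1}" "Tmap (K (k, t)) = K (k, t)" for k t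
  proof -
    have "K (k, t) \<in> Sp1xSp1" using KC' that by (simp add: Dm)
    then have "K (k, t) \<in> X0 \<or> K (k, t) \<in> Y0" using fix_T that by blast
    then show ?thesis by (auto simp: X0_iff Y0_iff)
  qed
  have qn: "qone \<noteq> 0" by (metis norm_qone norm_zero zero_neq_one)
  have cfst: "continuous_on {0..1} (\<lambda>t. fst (K (k, t)))" for k
    by (intro continuous_intros continuous_on_compose2[OF cK]) (auto intro!: continuous_intros simp: Dm)
  have e1: "fst (K (pi, 1)) = fst (K (pi, 0))"
    by (rule two_valued[OF cfst _ qn]) (use pm fixpi in blast)
  have e2: "fst (K (0, 1)) = fst (K (0, 0))"
    by (rule two_valued[OF cfst _ qn]) (use pm fix0 in blast)
  have l1: "is_lift (\<lambda>k. K (k, 1)) (\<lambda>k. mat 1)"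
    unfolding is_lift_def
  proof (intro conjI allI)
    show "continuous_on UNIV (\<lambda>k. K (k, 1))"
      by (rule continuous_on_compose2[OF cK]) (auto intro!: continuous_intros simp: Dm)
    fix k show "K (k, 1) \<in> Sp1xSp1" using KC' by (simp add: Dm)
    show "pcov (K (k, 1)) = mat 1" using HK[of "(k, 1)"] H(3) by (simp add: Dm)
  qed
  have l2: "is_lift (\<lambda>k. K (0, 1)) (\<lambda>k. mat 1)"
    using l1 unfolding is_lift_def by auto
  have "K (pi, 1) = K (0, 1)" using lift_unique[OF l1 l2, of 0 pi] by simp
  then have "fst (L pi) = fst (L 0)" using e1 e2 by (simp add: K0)
  then have fL: "fst (L pi) = qone" using x by (simp add: X0_iff)
  have "Tmap (L pi) = L pi" using fixpi[of 0] by (simp add: K0)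
  then have "L pi \<in> X0 \<or> L pi \<in> Y0" using fix_T lift_C[OF l] by blast
  moreover have "L pi \<notin> Y0"
  proof
    assume "L pi \<in> Y0"
    then have "qone = - qone" using fL by (simp add: Y0_iff)
    then show False by (simp add: quat_eq_iff)
  qed
  ultimately show ?thesis by blast
qed


lemma norm_sq3: "(norm (x::real^3))\<^sup>2 = (x$1)\<^sup>2 + (x$2)\<^sup>2 + (x$3)\<^sup>2"
proof -
  have "(norm x)\<^sup>2 = x \<bullet> x" by (simp add: dot_square_norm)
  then show ?thesis by (simp add: inner_vec_def sum_3 power2_eq_square)
qed

definition psi :: "real^3 \<Rightarrow> (real^4) \<times> (real^4)" where
  "psi x = (qone, quat (x$1) (x$2) 0 (x$3))"

lemma X0_psi: "X0 = psi ` sphere 0 1"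
proof
  show "psi ` sphere 0 1 \<subseteq> X0"
  proof
    fix a assume "a \<in> psi ` sphere 0 1"
    then obtain x where x: "norm x = 1" "a = psi x" by auto
    have "(x$1)\<^sup>2 + (x$2)\<^sup>2 + (x$3)\<^sup>2 = 1" using norm_sq3[of x] x(1) by simp
    then show "a \<in> X0" using x(2) by (simp add: X0_iff psi_def norm1_iff)
  qed
  show "X0 \<subseteq> psi ` sphere 0 1"
  proof
    fix a assume a: "a \<in> X0"
    define x :: "real^3" where "x = (\<chi> i. if i = 1 then snd a $ 1 else if i = 2 then snd a $ 2 else snd a $ 4)"
    have xn: "x$1 = snd a $ 1" "x$2 = snd a $ 2" "x$3 = snd a $ 4" by (simp_all add: x_def)
    have h: "fst a = qone" "snd a $ 3 = 0" "norm (snd a) = 1" using a by (simp_all add: X0_iff)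
    have "(norm x)\<^sup>2 = 1" using h(2,3) by (simp add: norm_sq3 xn norm1_iff)
    then have "norm x = 1" using power2_eq_iff_nonneg[of "norm x" 1] by simp
    moreover have "psi x = a" using h by (simp add: psi_def xn prod_eq_iff quat_eq_iff)
    ultimately show "a \<in> psi ` sphere 0 1" by force
  qed
qed

lemma X0_pc: "path_connected X0"
proof -
  have "path_connected (sphere (0::real^3) 1)" by (simp add: path_connected_sphere_eq)
  moreover have "continuous_on (sphere 0 1) psi" unfolding psi_def by (intro continuous_intros)
  ultimately show ?thesis unfolding X0_psi using path_connected_continuous_image by blast
qed

lemma C_sc: "simply_connected Sp1xSp1"
  unfolding Sp1xSp1_def Sp1_sphere by (intro simply_connected_Times simply_connected_sphere) simp_all

lemma X0_sub: "X0 \<subseteq> Sp1xSp1" using X0_C by blast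

lemma one_X0: "(qone, qone) \<in> X0" by (simp add: X0_iff)

lemma if_part:
  assumes W: "symmetric_loop W" and nh: "nullhomotopic_SO4 W" and l: "is_lift L W"
    and x: "L 0 \<in> X0" and y: "L pi \<in> X0"
  shows "symmetrically_homotopic W (\<lambda>k. mat 1)"
proof -
  have t0: "Tmap (L 0) = L 0" using x XY_fix by blast
  have Lp: "\<And>k. L (k + 2 * pi) = L k" using lift_per[OF W nh l] .
  define \<gamma> where "\<gamma> = (\<lambda>s. L (pi * s))"
  have p\<gamma>: "path \<gamma>" unfolding path_def \<gamma>_def
    by (rule continuous_on_compose2[OF lift_cont[OF l]]) (auto intro: continuous_intros)
  have i\<gamma>: "path_image \<gamma> \<subseteq> Sp1xSp1" using lift_C[OF l] by (auto simp: path_image_def \<gamma>_def)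
  obtain \<sigma> where \<sigma>: "path \<sigma>" "path_image \<sigma> \<subseteq> X0" "pathstart \<sigma> = L 0" "pathfinish \<sigma> = L pi"
    using X0_pc x y unfolding path_connected_def by blast
  have \<sigma>X: "\<And>s. s \<in> {0..1} \<Longrightarrow> \<sigma> s \<in> X0" using \<sigma>(2) by (auto simp: path_image_def)
  have hp: "homotopic_paths Sp1xSp1 \<gamma> \<sigma>"
    using C_sc unfolding simply_connected_eq_homotopic_paths
    using p\<gamma> i\<gamma> \<sigma>(1,2) X0_sub \<sigma>(3,4) by (auto simp: pathstart_def pathfinish_def \<gamma>_def)
  obtain h where h: "continuous_on ({0..1} \<times> {0..1}) h" "h \<in> ({0..1} \<times> {0..1}) \<rightarrow> Sp1xSp1"
     "\<forall>x \<in> {0..1}. h(0,x) = \<gamma> x" "\<forall>x \<in> {0..1}. h(1,x) = \<sigma> x"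
     "\<forall>t \<in> {0..1::real}. pathstart(h \<circ> Pair t) = pathstart \<gamma> \<and> pathfinish(h \<circ> Pair t) = pathfinish \<gamma>"
    using hp unfolding homotopic_paths by blast
  have A0: "symmetrically_homotopic (\<lambda>k. pcov (fold (\<lambda>s. h (0, s)) k)) (\<lambda>k. pcov (fold (\<lambda>s. h (1, s)) k))"
  proof (rule fold_homotopy[OF h(1)])
    show "\<And>z. z \<in> {0..1} \<times> {0..1} \<Longrightarrow> h z \<in> Sp1xSp1" using h(2) by blast
    fix t :: real assume t: "t \<in> {0..1}"
    have "h (t, 0) = L 0" "h (t, 1) = L pi" using h(5) t by (auto simp: pathstart_def pathfinish_def \<gamma>_def)
    then show "Tmap (h (t, 0)) = h (t, 0) \<and> Tmap (h (t, 1)) = h (t, 1)" using XY_fix x y by simp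
  qed
  have "(\<lambda>k. pcov (fold (\<lambda>s. h (0, s)) k)) = W"
  proof
    fix k
    have "fold (\<lambda>s. h (0, s)) k = fold \<gamma> k" by (rule fold_cong) (use h(3) in auto)
    also have "\<dots> = L k" unfolding \<gamma>_def by (rule fold_lift[OF W l t0 Lp])
    finally show "pcov (fold (\<lambda>s. h (0, s)) k) = W k" using lift_pcov[OF l] by simp
  qed
  moreover have "(\<lambda>k. pcov (fold (\<lambda>s. h (1, s)) k)) = (\<lambda>k. pcov (fold \<sigma> k))"
  proof
    fix k
    have "fold (\<lambda>s. h (1, s)) k = fold \<sigma> k" by (rule fold_cong) (use h(4) in auto)
    then show "pcov (fold (\<lambda>s. h (1, s)) k) = pcov (fold \<sigma> k)" by simp
  qed
  ultimately have A: "symmetrically_homotopic W (\<lambda>k. pcov (fold \<sigma> k))" using A0 by simp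
  have c\<sigma>: "continuous_on {0..1} \<sigma>" using \<sigma>(1) by (simp add: path_def)
  define g2 where "g2 = (\<lambda>z::real\<times>real. \<sigma> ((1 - fst z) * snd z))"
  have g2c: "continuous_on ({0..1} \<times> {0..1}) g2" unfolding g2_def
    by (rule continuous_on_compose2[OF c\<sigma>]) (auto intro!: continuous_intros mult_le_one simp: mem_Times_iff)
  have g2i: "g2 z \<in> Sp1xSp1" if "z \<in> {0..1} \<times> {0..1}" for z
  proof -
    have "(1 - fst z) * snd z \<in> {0..1}" using that by (auto intro: mult_le_one simp: mem_Times_iff)
    then show ?thesis using \<sigma>X X0_sub by (auto simp: g2_def)
  qed
  have g2e: "Tmap (g2 (t, 0)) = g2 (t, 0) \<and> Tmap (g2 (t, 1)) = g2 (t, 1)" if t: "t \<in> {0..1}" for t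
  proof -
    have "\<sigma> 0 \<in> X0" "\<sigma> (1 - t) \<in> X0" using \<sigma>X t by auto
    then show ?thesis using XY_fix by (simp add: g2_def)
  qed
  have B0: "symmetrically_homotopic (\<lambda>k. pcov (fold (\<lambda>s. g2 (0, s)) k)) (\<lambda>k. pcov (fold (\<lambda>s. g2 (1, s)) k))"
    by (rule fold_homotopy[OF g2c g2i g2e])
  then have B0: "symmetrically_homotopic (\<lambda>k. pcov (fold \<sigma> k)) (\<lambda>k. pcov (fold (\<lambda>s. \<sigma> 0) k))"
    by (simp add: g2_def)
  then have B: "symmetrically_homotopic (\<lambda>k. pcov (fold \<sigma> k)) (\<lambda>k. pcov (fold (\<lambda>s. L 0) k))"
    using \<sigma>(3) by (simp add: pathstart_def)
  obtain \<rho> where \<rho>: "path \<rho>" "path_image \<rho> \<subseteq> X0" "pathstart \<rho> = L 0" "pathfinish \<rho> = (qone, qone)"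
    using X0_pc x one_X0 unfolding path_connected_def by blast
  have \<rho>X: "\<And>s. s \<in> {0..1} \<Longrightarrow> \<rho> s \<in> X0" using \<rho>(2) by (auto simp: path_image_def)
  have c\<rho>: "continuous_on {0..1} \<rho>" using \<rho>(1) by (simp add: path_def)
  define g3 where "g3 = (\<lambda>z::real\<times>real. \<rho> (fst z))"
  have g3c: "continuous_on ({0..1} \<times> {0..1}) g3" unfolding g3_def
    by (rule continuous_on_compose2[OF c\<rho>]) (auto intro!: continuous_intros simp: mem_Times_iff)
  have g3i: "g3 z \<in> Sp1xSp1" if "z \<in> {0..1} \<times> {0..1}" for z
    using that \<rho>X X0_sub by (auto simp: g3_def mem_Times_iff)
  have g3e: "Tmap (g3 (t, 0)) = g3 (t, 0) \<and> Tmap (g3 (t, 1)) = g3 (t, 1)" if t: "t \<in> {0..1}" for t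
    using \<rho>X[OF t] XY_fix by (simp add: g3_def)
  have C0: "symmetrically_homotopic (\<lambda>k. pcov (fold (\<lambda>s. g3 (0, s)) k)) (\<lambda>k. pcov (fold (\<lambda>s. g3 (1, s)) k))"
    by (rule fold_homotopy[OF g3c g3i g3e])
  then have C0: "symmetrically_homotopic (\<lambda>k. pcov (fold (\<lambda>s. \<rho> 0) k)) (\<lambda>k. pcov (fold (\<lambda>s. \<rho> 1) k))"
    by (simp add: g3_def)
  have r1: "\<rho> 1 = (qone, qone)" using \<rho>(4) by (simp add: pathfinish_def)
  have "fold (\<lambda>s. \<rho> 1) k = (qone, qone)" for k
    unfolding fold_def r1 using Tmap_one by simp
  then have "(\<lambda>k. pcov (fold (\<lambda>s. \<rho> 1) k)) = (\<lambda>k. mat 1)"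
    by (simp add: pcov_one)
  then have C: "symmetrically_homotopic (\<lambda>k. pcov (fold (\<lambda>s. L 0) k)) (\<lambda>k. mat 1)"
    using C0 \<rho>(3) by (simp add: pathstart_def)
  show ?thesis by (rule symhom_trans[OF A symhom_trans[OF B C]])
qed


theorem theorem2:
  fixes W :: "real \<Rightarrow> real^4^4"
  assumes "symmetric_loop W"
    and "nullhomotopic_SO4 W"
    and "\<exists>L. is_lift L W \<and> Tmap (L 0) = L 0"
  shows "(\<exists>L. is_lift L W \<and> L 0 \<in> X0)
    \<and> (\<forall>L. is_lift L W \<and> L 0 \<in> X0 \<longrightarrow>
          L pi \<in> X0 \<union> Y0
        \<and> (symmetrically_homotopic W (\<lambda>k. mat 1) \<longleftrightarrow> L pi \<in> X0)
        \<and> (L pi \<in> Y0 \<longrightarrow> \<not> symmetrically_homotopic W (\<lambda>k. mat 1)))"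
proof
  note W = assms(1) and nh = assms(2)
  obtain L0 where l0: "is_lift L0 W" "Tmap (L0 0) = L0 0" using assms(3) by blast
  have "L0 0 \<in> X0 \<or> L0 0 \<in> Y0" using fix_T[OF lift_C[OF l0(1)] l0(2)] .
  then show "\<exists>L. is_lift L W \<and> L 0 \<in> X0"
  proof
    assume "L0 0 \<in> X0" then show ?thesis using l0 by blast
  next
    assume "L0 0 \<in> Y0"
    then have "- L0 0 \<in> X0" by (simp add: Y0_iff_neg)
    then show ?thesis using lift_neg[OF l0(1)] by blast
  qed
  show "\<forall>L. is_lift L W \<and> L 0 \<in> X0 \<longrightarrow>
          L pi \<in> X0 \<union> Y0
        \<and> (symmetrically_homotopic W (\<lambda>k. mat 1) \<longleftrightarrow> L pi \<in> X0)
        \<and> (L pi \<in> Y0 \<longrightarrow> \<not> symmetrically_homotopic W (\<lambda>k. mat 1))"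
  proof (intro allI impI)
    fix L assume "is_lift L W \<and> L 0 \<in> X0"
    then have l: "is_lift L W" and x: "L 0 \<in> X0" by auto
    have t0: "Tmap (L 0) = L 0" using x XY_fix by blast
    have "L (- pi + 2 * pi) = L (- pi)" using lift_per[OF W nh l] .
    then have "L pi = L (- pi)" by simp
    moreover have "Tmap (L (- pi)) = L pi" using sym_lift_eq[OF W l t0, of pi] .
    ultimately have "Tmap (L pi) = L pi" by simp
    then have xy: "L pi \<in> X0 \<or> L pi \<in> Y0" using fix_T[OF lift_C[OF l]] by blast
    have iff: "symmetrically_homotopic W (\<lambda>k. mat 1) \<longleftrightarrow> L pi \<in> X0"
      using only_if[OF W nh l x] if_part[OF W nh l x] by blast
    show "L pi \<in> X0 \<union> Y0
        \<and> (symmetrically_homotopic W (\<lambda>k. mat 1) \<longleftrightarrow> L pi \<in> X0)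
        \<and> (L pi \<in> Y0 \<longrightarrow> \<not> symmetrically_homotopic W (\<lambda>k. mat 1))"
      using xy iff XY_disj by blast
  qed
qed


end
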